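(* Let $\lambda$ be an infinite cardinal with $\lambda=\lambda^{\aleph_0}>|R|$, let $T$ be the set of all finite sequences $\tau\colon n\to\lambda$ ($n\in\omega$), and let $E=\bigoplus_{\tau\in T}R\tau$ be the free $R$-module with basis $T$. Let $H$ be a cotorsion-free $R$-module of cardinality less than $\lambda$, let $\widehat E$, $\widehat H$ be the $\mathbb S$-adic completions and $\widehat B=\widehat E\oplus\widehat H$, and let $\pi\colon\widehat B\to\widehat H$ be the canonical projection with kernel $\widehat E$. Let $H'\subseteq H$ be a pure submodule, $E'$ a direct summand of $E$, and let $\varphi\colon\mathrm{Dom}(\varphi)\to\widehat E\oplus H$ be an $R$-homomorphism defined on a submodule $\mathrm{Dom}(\varphi)$ with $E'\subseteq\mathrm{Dom}(\varphi)\subseteq\widehat E\oplus H'$, both inclusions pure, and $\pi(\mathrm{Dom}(\varphi))=H'$. Then $\varphi$ has a unique extension to an $R$-homomorphism $\widehat\varphi\colon\widehat{E'}\oplus H'\to\widehat E\oplus\widehat H=\widehat B$.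
   Context: Standing setting: $R$ is a commutative ring with $1$ with a distinguished countable multiplicatively closed subset $\mathbb S=\{s_n:n\in\omega\}$ such that $R$ is $\mathbb S$-reduced and $\mathbb S$-torsion-free and cotorsion-free. $\widehat R$ and $\widehat M$ denote $\mathbb S$-adic completions (topology with neighbourhoods of zero $q_mM$, $q_m=\prod_{n<m}s_n$). An $R$-module $M$ is cotorsion-free if $\mathrm{Hom}_R(\widehat R,M)=0$. A submodule $N\subseteq M$ is pure if $sM\cap N=sN$ for all $s\in\mathbb S$. *)

theory Defs
  imports Main "HOL-Library.Equipollence"
begin

record ('r, 'm) rmod =
  carrier :: "'m set"
  mzero :: 'm
  madd :: "'m \<Rightarrow> 'm \<Rightarrow> 'm"
  mneg :: "'m \<Rightarrow> 'm"
  msmult :: "'r \<Rightarrow> 'm \<Rightarrow> 'm"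

definition is_rmod :: "('r::comm_ring_1, 'm) rmod \<Rightarrow> bool" where
  "is_rmod M \<longleftrightarrow>
     mzero M \<in> carrier M \<and>
     (\<forall>x\<in>carrier M. \<forall>y\<in>carrier M. madd M x y \<in> carrier M) \<and>
     (\<forall>x\<in>carrier M. mneg M x \<in> carrier M) \<and>
     (\<forall>r. \<forall>x\<in>carrier M. msmult M r x \<in> carrier M) \<and>
     (\<forall>x\<in>carrier M. \<forall>y\<in>carrier M. \<forall>z\<in>carrier M.
        madd M (madd M x y) z = madd M x (madd M y z)) \<and>
     (\<forall>x\<in>carrier M. \<forall>y\<in>carrier M. madd M x y = madd M y x) \<and>
     (\<forall>x\<in>carrier M. madd M (mzero M) x = x) \<and>
     (\<forall>x\<in>carrier M. madd M (mneg M x) x = mzero M) \<and>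
     (\<forall>r. \<forall>x\<in>carrier M. \<forall>y\<in>carrier M.
        msmult M r (madd M x y) = madd M (msmult M r x) (msmult M r y)) \<and>
     (\<forall>r t. \<forall>x\<in>carrier M. msmult M (r + t) x = madd M (msmult M r x) (msmult M t x)) \<and>
     (\<forall>r t. \<forall>x\<in>carrier M. msmult M (r * t) x = msmult M r (msmult M t x)) \<and>
     (\<forall>x\<in>carrier M. msmult M 1 x = x)"

definition submodule :: "('r::comm_ring_1, 'm) rmod \<Rightarrow> 'm set \<Rightarrow> bool" where
  "submodule M N \<longleftrightarrow> N \<subseteq> carrier M \<and> mzero M \<in> N \<and>
     (\<forall>x\<in>N. \<forall>y\<in>N. madd M x y \<in> N) \<and> (\<forall>x\<in>N. mneg M x \<in> N) \<and>
     (\<forall>r. \<forall>x\<in>N. msmult M r x \<in> N)"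

definition submod :: "('r, 'm) rmod \<Rightarrow> 'm set \<Rightarrow> ('r, 'm) rmod" where
  "submod M N = M\<lparr>carrier := N\<rparr>"

definition direct_summand :: "('r::comm_ring_1, 'm) rmod \<Rightarrow> 'm set \<Rightarrow> bool" where
  "direct_summand M N \<longleftrightarrow> submodule M N \<and>
     (\<exists>C. submodule M C \<and> N \<inter> C = {mzero M} \<and>
          carrier M = {madd M a c | a c. a \<in> N \<and> c \<in> C})"

text \<open>Homomorphisms (only their values on the carrier matter).\<close>
definition rhom :: "('r::comm_ring_1, 'm) rmod \<Rightarrow> ('r, 'n) rmod \<Rightarrow> ('m \<Rightarrow> 'n) \<Rightarrow> bool" where
  "rhom M N f \<longleftrightarrow> (\<forall>x\<in>carrier M. f x \<in> carrier N) \<and>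
     (\<forall>x\<in>carrier M. \<forall>y\<in>carrier M. f (madd M x y) = madd N (f x) (f y)) \<and>
     (\<forall>r. \<forall>x\<in>carrier M. f (msmult M r x) = msmult N r (f x))"

definition prodmod :: "('r, 'm) rmod \<Rightarrow> ('r, 'n) rmod \<Rightarrow> ('r, 'm \<times> 'n) rmod" where
  "prodmod M N = \<lparr>carrier = carrier M \<times> carrier N,
     mzero = (mzero M, mzero N),
     madd = (\<lambda>(a, b) (c, d). (madd M a c, madd N b d)),
     mneg = (\<lambda>(a, b). (mneg M a, mneg N b)),
     msmult = (\<lambda>r (a, b). (msmult M r a, msmult N r b))\<rparr>"

definition ringmod :: "('r::comm_ring_1, 'r) rmod" where
  "ringmod = \<lparr>carrier = UNIV, mzero = 0, madd = (+), mneg = uminus, msmult = (*)\<rparr>"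

text \<open>The free R-module with basis T = all finite sequences (lists) over 'k:
  finitely supported functions T \<Rightarrow> R; a sequence \<tau> corresponds to the indicator of \<tau>.\<close>
definition freemod :: "('r::comm_ring_1, 'k list \<Rightarrow> 'r) rmod" where
  "freemod = \<lparr>carrier = {f. finite {t. f t \<noteq> 0}},
     mzero = (\<lambda>t. 0),
     madd = (\<lambda>f g t. f t + g t),
     mneg = (\<lambda>f t. - f t),
     msmult = (\<lambda>r f t. r * f t)\<rparr>"

text \<open>The distinguished countable multiplicatively closed set is S = range s;
  q_m = s_0 * ... * s_(m-1).\<close>
definition qmul :: "(nat \<Rightarrow> 'r::comm_ring_1) \<Rightarrow> nat \<Rightarrow> 'r" where
  "qmul s m = (\<Prod>n<m. s n)"

definition qsub :: "(nat \<Rightarrow> 'r::comm_ring_1) \<Rightarrow> ('r, 'm) rmod \<Rightarrow> nat \<Rightarrow> 'm set" where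
  "qsub s M m = msmult M (qmul s m) ` carrier M"

definition mult_closed_seq :: "(nat \<Rightarrow> 'r::comm_ring_1) \<Rightarrow> bool" where
  "mult_closed_seq s \<longleftrightarrow> 1 \<in> range s \<and> (\<forall>a\<in>range s. \<forall>b\<in>range s. a * b \<in> range s)"

definition S_reduced_ring :: "(nat \<Rightarrow> 'r::comm_ring_1) \<Rightarrow> bool" where
  "S_reduced_ring s \<longleftrightarrow> (\<Inter>n. range (\<lambda>r. s n * r)) = {0}"

definition S_torsion_free_ring :: "(nat \<Rightarrow> 'r::comm_ring_1) \<Rightarrow> bool" where
  "S_torsion_free_ring s \<longleftrightarrow> (\<forall>n r. s n * r = 0 \<longrightarrow> r = 0)"

definition pure :: "(nat \<Rightarrow> 'r::comm_ring_1) \<Rightarrow> ('r, 'm) rmod \<Rightarrow> 'm set \<Rightarrow> bool" where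
  "pure s M N \<longleftrightarrow> (\<forall>n. (msmult M (s n) ` carrier M) \<inter> N = msmult M (s n) ` N)"

definition coset :: "('r, 'm) rmod \<Rightarrow> 'm \<Rightarrow> 'm set \<Rightarrow> 'm set" where
  "coset M a N = madd M a ` N"

text \<open>The S-adic completion, realised as the inverse limit of the M / q_m M:
  an element is a compatible sequence of cosets x m \<in> M / q_m M.\<close>
definition completion :: "(nat \<Rightarrow> 'r::comm_ring_1) \<Rightarrow> ('r, 'm) rmod \<Rightarrow> ('r, nat \<Rightarrow> 'm set) rmod" where
  "completion s M = \<lparr>
     carrier = {x. (\<forall>m. \<exists>a\<in>carrier M. x m = coset M a (qsub s M m)) \<and> (\<forall>m. x (Suc m) \<subseteq> x m)},
     mzero = (\<lambda>m. qsub s M m),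
     madd = (\<lambda>x y m. {madd M a b | a b. a \<in> x m \<and> b \<in> y m}),
     mneg = (\<lambda>x m. mneg M ` x m),
     msmult = (\<lambda>r x m. {madd M (msmult M r a) b | a b. a \<in> x m \<and> b \<in> qsub s M m})\<rparr>"

definition cemb :: "(nat \<Rightarrow> 'r::comm_ring_1) \<Rightarrow> ('r, 'm) rmod \<Rightarrow> 'm \<Rightarrow> (nat \<Rightarrow> 'm set)" where
  "cemb s M a = (\<lambda>m. coset M a (qsub s M m))"

text \<open>Map induced by the inclusion N \<subseteq> M on completions
  (completion of submod M N into completion of M).\<close>
definition compl_incl :: "(nat \<Rightarrow> 'r::comm_ring_1) \<Rightarrow> ('r, 'm) rmod \<Rightarrow> (nat \<Rightarrow> 'm set) \<Rightarrow> (nat \<Rightarrow> 'm set)" where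
  "compl_incl s M x = (\<lambda>m. {madd M a b | a b. a \<in> x m \<and> b \<in> qsub s M m})"

definition sub_completion :: "(nat \<Rightarrow> 'r::comm_ring_1) \<Rightarrow> ('r, 'm) rmod \<Rightarrow> 'm set \<Rightarrow> (nat \<Rightarrow> 'm set) set" where
  "sub_completion s M N = compl_incl s M ` carrier (completion s (submod M N))"

definition cotorsion_free :: "(nat \<Rightarrow> 'r::comm_ring_1) \<Rightarrow> ('r, 'm) rmod \<Rightarrow> bool" where
  "cotorsion_free s M \<longleftrightarrow>
     (\<forall>f. rhom (completion s (ringmod :: ('r, 'r) rmod)) M f \<longrightarrow>
          (\<forall>x\<in>carrier (completion s (ringmod :: ('r, 'r) rmod)). f x = mzero M))"

end

theory Submission
  imports Defs
begin


lemma carrier_submod[simp]: "carrier (submod M N) = N"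
  and madd_submod[simp]: "madd (submod M N) = madd M"
  and mzero_submod[simp]: "mzero (submod M N) = mzero M"
  and mneg_submod[simp]: "mneg (submod M N) = mneg M"
  and msmult_submod[simp]: "msmult (submod M N) = msmult M"
  by (simp_all add: submod_def)

lemma prodmod_simps[simp]:
  "carrier (prodmod M N) = carrier M \<times> carrier N"
  "mzero (prodmod M N) = (mzero M, mzero N)"
  "madd (prodmod M N) (a,b) (c,d) = (madd M a c, madd N b d)"
  "mneg (prodmod M N) (a,b) = (mneg M a, mneg N b)"
  "msmult (prodmod M N) r (a,b) = (msmult M r a, msmult N r b)"
  by (simp_all add: prodmod_def)

lemma qmul_Suc: "qmul s (Suc n) = qmul s n * s n"
  by (simp add: qmul_def)

lemma qmul_0[simp]: "qmul s 0 = 1" by (simp add: qmul_def)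

lemma qmul_dvd: "m \<le> n \<Longrightarrow> qmul s m dvd qmul s n"
proof (induction n)
  case 0 then show ?case by simp
next
  case (Suc n)
  show ?case
  proof (cases "m = Suc n")
    case True then show ?thesis by simp
  next
    case False
    then have "qmul s m dvd qmul s n" using Suc by simp
    then show ?thesis by (simp add: qmul_Suc)
  qed
qed

lemma qmul_range: "mult_closed_seq s \<Longrightarrow> qmul s n \<in> range s"
proof (induction n)
  case 0 then show ?case by (simp add: mult_closed_seq_def)
next
  case (Suc n)
  then obtain i where i: "qmul s n = s i" by auto
  have "s i * s n \<in> range s" using Suc.prems unfolding mult_closed_seq_def by blast
  then show ?case using i by (simp add: qmul_Suc)
qed

lemma qmul_tf: "S_torsion_free_ring s \<Longrightarrow> qmul s n * r = 0 \<Longrightarrow> r = 0"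
proof (induction n arbitrary: r)
  case 0 then show ?case by simp
next
  case (Suc n)
  then have "qmul s n * (s n * r) = 0" by (simp add: qmul_Suc mult.assoc)
  then have "s n * r = 0" using Suc by blast
  then show ?case using Suc.prems(1) unfolding S_torsion_free_ring_def by blast
qed

lemma qmul_cofinal: "mult_closed_seq s \<Longrightarrow> \<exists>M\<ge>N. (qmul s n * qmul s k) dvd qmul s M"
proof -
  assume mc: "mult_closed_seq s"
  obtain i1 i2 where "qmul s n = s i1" "qmul s k = s i2" using qmul_range[OF mc] by (metis rangeE)
  moreover have "s i1 * s i2 \<in> range s" using mc unfolding mult_closed_seq_def by blast
  ultimately have "qmul s n * qmul s k \<in> range s" by simp
  then obtain j where j: "qmul s n * qmul s k = s j" by auto
  have "s j dvd qmul s (Suc j)" by (simp add: qmul_Suc)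
  also have "\<dots> dvd qmul s (max N (Suc j))" by (rule qmul_dvd) simp
  finally show ?thesis using j by (intro exI[of _ "max N (Suc j)"]) simp
qed

locale rm =
  fixes M :: "('r::comm_ring_1, 'm) rmod" and s :: "nat \<Rightarrow> 'r"
  assumes ax: "is_rmod M"
begin

abbreviation "C \<equiv> carrier M"
abbreviation add (infixl "\<oplus>" 65) where "add \<equiv> madd M"
abbreviation "z0 \<equiv> mzero M"
abbreviation "ng \<equiv> mneg M"
abbreviation sm (infixr "\<odot>" 70) where "sm \<equiv> msmult M"

lemma axp:
  "z0 \<in> C"
  "\<forall>x\<in>C. \<forall>y\<in>C. x \<oplus> y \<in> C"
  "\<forall>x\<in>C. ng x \<in> C"
  "\<forall>r. \<forall>x\<in>C. r \<odot> x \<in> C"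
  "\<forall>x\<in>C. \<forall>y\<in>C. \<forall>z\<in>C. (x \<oplus> y) \<oplus> z = x \<oplus> (y \<oplus> z)"
  "\<forall>x\<in>C. \<forall>y\<in>C. x \<oplus> y = y \<oplus> x"
  "\<forall>x\<in>C. z0 \<oplus> x = x"
  "\<forall>x\<in>C. ng x \<oplus> x = z0"
  "\<forall>r. \<forall>x\<in>C. \<forall>y\<in>C. r \<odot> (x \<oplus> y) = r \<odot> x \<oplus> r \<odot> y"
  "\<forall>r t. \<forall>x\<in>C. (r + t) \<odot> x = r \<odot> x \<oplus> t \<odot> x"
  "\<forall>r t. \<forall>x\<in>C. (r * t) \<odot> x = r \<odot> (t \<odot> x)"
  "\<forall>x\<in>C. 1 \<odot> x = x"
  using ax unfolding is_rmod_def by auto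

lemma zero_c[simp]: "z0 \<in> C" by (rule axp(1))
lemma add_c[simp]: "x \<in> C \<Longrightarrow> y \<in> C \<Longrightarrow> x \<oplus> y \<in> C" using axp(2) by blast
lemma neg_c[simp]: "x \<in> C \<Longrightarrow> ng x \<in> C" using axp(3) by blast
lemma sm_c[simp]: "x \<in> C \<Longrightarrow> r \<odot> x \<in> C" using axp(4) by blast
lemma assoc: "x \<in> C \<Longrightarrow> y \<in> C \<Longrightarrow> z \<in> C \<Longrightarrow> (x \<oplus> y) \<oplus> z = x \<oplus> (y \<oplus> z)"
  using axp(5) by blast
lemma comm: "x \<in> C \<Longrightarrow> y \<in> C \<Longrightarrow> x \<oplus> y = y \<oplus> x"
  using axp(6) by blast
lemma zl[simp]: "x \<in> C \<Longrightarrow> z0 \<oplus> x = x" using axp(7) by blast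
lemma zr[simp]: "x \<in> C \<Longrightarrow> x \<oplus> z0 = x" using comm zl zero_c by metis
lemma nl[simp]: "x \<in> C \<Longrightarrow> ng x \<oplus> x = z0" using axp(8) by blast
lemma nr[simp]: "x \<in> C \<Longrightarrow> x \<oplus> ng x = z0" using comm nl neg_c by metis
lemma sm_add: "x \<in> C \<Longrightarrow> y \<in> C \<Longrightarrow> r \<odot> (x \<oplus> y) = r \<odot> x \<oplus> r \<odot> y"
  using axp(9) by blast
lemma add_sm: "x \<in> C \<Longrightarrow> (r + t) \<odot> x = r \<odot> x \<oplus> t \<odot> x"
  using axp(10) by blast
lemma sm_sm: "x \<in> C \<Longrightarrow> (r * t) \<odot> x = r \<odot> (t \<odot> x)"
  using axp(11) by blast
lemma one_sm[simp]: "x \<in> C \<Longrightarrow> 1 \<odot> x = x"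
  using axp(12) by blast

lemma assoc_l: "x \<in> C \<Longrightarrow> y \<in> C \<Longrightarrow> z \<in> C \<Longrightarrow> x \<oplus> (y \<oplus> z) = y \<oplus> (x \<oplus> z)"
  by (metis assoc comm)

lemma cancel: "x \<in> C \<Longrightarrow> y \<in> C \<Longrightarrow> z \<in> C \<Longrightarrow> x \<oplus> y = x \<oplus> z \<Longrightarrow> y = z"
  by (metis assoc nl zl neg_c)

lemma sm_zero[simp]: "r \<odot> z0 = z0"
proof -
  have "r \<odot> z0 \<oplus> r \<odot> z0 = r \<odot> z0 \<oplus> z0" using sm_add[of z0 z0 r] by simp
  then show ?thesis using cancel[of "r \<odot> z0" "r \<odot> z0" z0] by simp
qed

lemma zero_sm[simp]: "x \<in> C \<Longrightarrow> 0 \<odot> x = z0"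
proof -
  assume x: "x \<in> C"
  have "0 \<odot> x \<oplus> 0 \<odot> x = 0 \<odot> x \<oplus> z0" using add_sm[OF x, of 0 0] x by simp
  then show ?thesis using cancel[of "0 \<odot> x" "0 \<odot> x" z0] x by simp
qed

lemma neg_unique: "x \<in> C \<Longrightarrow> y \<in> C \<Longrightarrow> x \<oplus> y = z0 \<Longrightarrow> y = ng x"
  by (metis cancel nr neg_c)

lemma sm_neg: "x \<in> C \<Longrightarrow> r \<odot> ng x = ng (r \<odot> x)"
  by (metis neg_unique nr sm_add sm_c neg_c sm_zero)

lemma neg_add: "x \<in> C \<Longrightarrow> y \<in> C \<Longrightarrow> ng (x \<oplus> y) = ng x \<oplus> ng y"
proof -
  assume x: "x \<in> C" and y: "y \<in> C"
  have "(x \<oplus> y) \<oplus> (ng x \<oplus> ng y) = (x \<oplus> ng x) \<oplus> (y \<oplus> ng y)"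
    using x y by (simp add: assoc assoc_l)
  also have "\<dots> = z0" using x y by simp
  finally show ?thesis using x y neg_unique by (metis add_c neg_c)
qed

lemma neg_neg[simp]: "x \<in> C \<Longrightarrow> ng (ng x) = x"
  by (metis neg_unique nl neg_c)

lemma neg_zero[simp]: "ng z0 = z0" by (metis neg_unique zl zero_c)

lemma ac4: "a \<in> C \<Longrightarrow> b \<in> C \<Longrightarrow> c \<in> C \<Longrightarrow> d \<in> C \<Longrightarrow> (a \<oplus> b) \<oplus> (c \<oplus> d) = (a \<oplus> c) \<oplus> (b \<oplus> d)"
  by (simp add: assoc assoc_l)

lemma sub_cancel: "x \<in> C \<Longrightarrow> y \<in> C \<Longrightarrow> x \<oplus> (ng x \<oplus> y) = y"
  by (metis assoc nr zl neg_c)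

lemma sub_cancel2: "x \<in> C \<Longrightarrow> y \<in> C \<Longrightarrow> ng x \<oplus> (x \<oplus> y) = y"
  by (metis assoc nl zl neg_c)

lemma subm_props:
  assumes "submodule M N"
  shows "N \<subseteq> C" "z0 \<in> N" "x \<in> N \<Longrightarrow> y \<in> N \<Longrightarrow> x \<oplus> y \<in> N" "x \<in> N \<Longrightarrow> ng x \<in> N"
    "x \<in> N \<Longrightarrow> r \<odot> x \<in> N"
  using assms by (auto simp: submodule_def)

lemma coset_mem: "submodule M N \<Longrightarrow> a \<in> C \<Longrightarrow> a \<in> coset M a N"
  unfolding coset_def using subm_props(2) zr by (metis image_eqI)

lemma coset_sub: "submodule M N \<Longrightarrow> a \<in> C \<Longrightarrow> coset M a N \<subseteq> C"
  unfolding coset_def using subm_props(1)[of N] by (auto intro!: add_c)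

lemma coset_eq:
  assumes N: "submodule M N" and a: "a \<in> C" and b: "b \<in> coset M a N"
  shows "coset M b N = coset M a N"
proof -
  obtain n0 where n0: "n0 \<in> N" "b = a \<oplus> n0" using b by (auto simp: coset_def)
  have n0c: "n0 \<in> C" using n0 subm_props(1)[OF N] by auto
  show ?thesis
  proof
    show "coset M b N \<subseteq> coset M a N"
    proof
      fix x assume "x \<in> coset M b N"
      then obtain n where n: "n \<in> N" "x = b \<oplus> n" by (auto simp: coset_def)
      have "x = a \<oplus> (n0 \<oplus> n)" using n n0 n0c a subm_props(1)[OF N] by (auto simp: assoc)
      then show "x \<in> coset M a N" unfolding coset_def using subm_props(3)[OF N] n n0 by auto
    qed
  next
    show "coset M a N \<subseteq> coset M b N"
    proof
      fix x assume "x \<in> coset M a N"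
      then obtain n where n: "n \<in> N" "x = a \<oplus> n" by (auto simp: coset_def)
      have nc: "n \<in> C" using n subm_props(1)[OF N] by auto
      have "x = b \<oplus> (ng n0 \<oplus> n)" using n n0 n0c a nc by (simp add: assoc sub_cancel)
      then show "x \<in> coset M b N" unfolding coset_def using subm_props(3,4)[OF N] n n0 by auto
    qed
  qed
qed

lemma coset_sum:
  assumes N: "submodule M N" and a: "a \<in> C" and b: "b \<in> C"
  shows "{x \<oplus> y |x y. x \<in> coset M a N \<and> y \<in> coset M b N} = coset M (a \<oplus> b) N"
proof -
  have NC: "\<And>n. n \<in> N \<Longrightarrow> n \<in> C" using subm_props(1)[OF N] by auto
  show ?thesis
  proof (intro set_eqI iffI)
    fix x assume "x \<in> {x \<oplus> y |x y. x \<in> coset M a N \<and> y \<in> coset M b N}"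
    then obtain n1 n2 where n: "n1 \<in> N" "n2 \<in> N" "x = (a \<oplus> n1) \<oplus> (b \<oplus> n2)"
      by (auto simp: coset_def)
    then have "x = (a \<oplus> b) \<oplus> (n1 \<oplus> n2)" using a b NC ac4[of a n1 b n2] by auto
    then show "x \<in> coset M (a \<oplus> b) N" using n subm_props(3)[OF N] by (auto simp: coset_def)
  next
    fix x assume "x \<in> coset M (a \<oplus> b) N"
    then obtain n where n: "n \<in> N" "x = (a \<oplus> b) \<oplus> n" by (auto simp: coset_def)
    have nC: "n \<in> C" using NC n by auto
    have "(a \<oplus> n) \<oplus> (b \<oplus> z0) = (a \<oplus> b) \<oplus> (n \<oplus> z0)" by (rule ac4[OF a nC b zero_c])
    then have "x = (a \<oplus> n) \<oplus> (b \<oplus> z0)" using n nC by simp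
    moreover have "a \<oplus> n \<in> coset M a N" "b \<oplus> z0 \<in> coset M b N"
      using n subm_props(2)[OF N] by (auto simp: coset_def)
    ultimately show "x \<in> {x \<oplus> y |x y. x \<in> coset M a N \<and> y \<in> coset M b N}" by blast
  qed
qed

lemma coset_smult:
  assumes N: "submodule M N" and a: "a \<in> C"
  shows "{r \<odot> x \<oplus> y |x y. x \<in> coset M a N \<and> y \<in> N} = coset M (r \<odot> a) N"
proof -
  have NC: "\<And>n. n \<in> N \<Longrightarrow> n \<in> C" using subm_props(1)[OF N] by auto
  show ?thesis
  proof (intro set_eqI iffI)
    fix x assume "x \<in> {r \<odot> x \<oplus> y |x y. x \<in> coset M a N \<and> y \<in> N}"
    then obtain n1 n2 where n: "n1 \<in> N" "n2 \<in> N" "x = r \<odot> (a \<oplus> n1) \<oplus> n2"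
      by (auto simp: coset_def)
    then have "x = r \<odot> a \<oplus> (r \<odot> n1 \<oplus> n2)" using a NC by (simp add: sm_add assoc)
    then show "x \<in> coset M (r \<odot> a) N" using n subm_props(3,5)[OF N] by (auto simp: coset_def)
  next
    fix x assume "x \<in> coset M (r \<odot> a) N"
    then obtain n where n: "n \<in> N" "x = r \<odot> a \<oplus> n" by (auto simp: coset_def)
    have "x = r \<odot> (a \<oplus> z0) \<oplus> n" using n a by simp
    moreover have "a \<oplus> z0 \<in> coset M a N"
      using subm_props(2)[OF N] by (auto simp: coset_def)
    ultimately show "x \<in> {r \<odot> x \<oplus> y |x y. x \<in> coset M a N \<and> y \<in> N}" using n by blast
  qed
qed

lemma coset_neg:
  assumes N: "submodule M N" and a: "a \<in> C"
  shows "ng ` coset M a N = coset M (ng a) N"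
proof -
  have NC: "\<And>n. n \<in> N \<Longrightarrow> n \<in> C" using subm_props(1)[OF N] by auto
  show ?thesis
  proof (intro set_eqI iffI)
    fix x assume "x \<in> ng ` coset M a N"
    then obtain n where n: "n \<in> N" "x = ng (a \<oplus> n)" by (auto simp: coset_def)
    then have "x = ng a \<oplus> ng n" using a NC neg_add by auto
    then show "x \<in> coset M (ng a) N" using n subm_props(4)[OF N] by (auto simp: coset_def)
  next
    fix x assume "x \<in> coset M (ng a) N"
    then obtain n where n: "n \<in> N" "x = ng a \<oplus> n" by (auto simp: coset_def)
    have "x = ng (a \<oplus> ng n)" using n a NC neg_add by simp
    then show "x \<in> ng ` coset M a N" using n subm_props(4)[OF N] by (auto simp: coset_def)
  qed
qed

end


context rm begin

abbreviation "Q n \<equiv> qsub s M n"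
abbreviation "Mh \<equiv> completion s M"

lemma Q_sub: "submodule M (Q n)"
  unfolding submodule_def qsub_def
proof (intro conjI ballI allI)
  show "(\<odot>) (qmul s n) ` C \<subseteq> C" by auto
  show "z0 \<in> (\<odot>) (qmul s n) ` C" using sm_zero zero_c by (metis image_eqI)
next
  fix x y assume "x \<in> (\<odot>) (qmul s n) ` C" "y \<in> (\<odot>) (qmul s n) ` C"
  then obtain a b where "a \<in> C" "b \<in> C" "x = qmul s n \<odot> a" "y = qmul s n \<odot> b" by auto
  then show "x \<oplus> y \<in> (\<odot>) (qmul s n) ` C" using sm_add by (metis add_c image_eqI)
next
  fix x assume "x \<in> (\<odot>) (qmul s n) ` C"
  then obtain a where "a \<in> C" "x = qmul s n \<odot> a" by auto
  then show "ng x \<in> (\<odot>) (qmul s n) ` C" using sm_neg by (metis neg_c image_eqI)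
next
  fix r x assume "x \<in> (\<odot>) (qmul s n) ` C"
  then obtain a where a: "a \<in> C" "x = qmul s n \<odot> a" by auto
  then have "r \<odot> x = qmul s n \<odot> (r \<odot> a)" using sm_sm by (metis mult.commute)
  then show "r \<odot> x \<in> (\<odot>) (qmul s n) ` C" using a by auto
qed

lemma Q_C: "x \<in> Q n \<Longrightarrow> x \<in> C" using subm_props(1)[OF Q_sub] by auto

lemma Q_dvd: "qmul s k dvd r \<Longrightarrow> x \<in> C \<Longrightarrow> r \<odot> x \<in> Q k"
proof -
  assume "qmul s k dvd r" "x \<in> C"
  then obtain c where "r = qmul s k * c" by (auto simp: dvd_def)
  then have "r \<odot> x = qmul s k \<odot> (c \<odot> x)" using \<open>x \<in> C\<close> sm_sm by simp
  then show ?thesis using \<open>x \<in> C\<close> by (simp add: qsub_def)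
qed

lemma Q_mono: "k \<le> n \<Longrightarrow> Q n \<subseteq> Q k"
  using Q_dvd[OF qmul_dvd] by (auto simp: qsub_def)

lemma Q_in: "x \<in> C \<Longrightarrow> qmul s n \<odot> x \<in> Q n" by (simp add: qsub_def)

lemma coset_mono: "N \<subseteq> N' \<Longrightarrow> coset M a N \<subseteq> coset M a N'"
  by (auto simp: coset_def)

lemma coset_zero: "submodule M N \<Longrightarrow> coset M z0 N = N"
  using subm_props(1)[of N] by (force simp: coset_def)

lemma coset_absorb: "a \<in> C \<Longrightarrow> t \<in> Q n \<Longrightarrow> coset M (a \<oplus> t) (Q n) = coset M a (Q n)"
  by (rule coset_eq[OF Q_sub]) (auto simp: coset_def)

lemma coset_eq_iff_mem: "a \<in> C \<Longrightarrow> b \<in> C \<Longrightarrow> coset M a (Q n) = coset M b (Q n) \<Longrightarrow> a \<in> coset M b (Q n)"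
  using coset_mem[OF Q_sub] by blast

lemma compl_carrier: "x \<in> carrier Mh \<longleftrightarrow> (\<forall>m. \<exists>a\<in>C. x m = coset M a (Q m)) \<and> (\<forall>m. x (Suc m) \<subseteq> x m)"
  by (simp add: completion_def)

lemma compl_ops:
  "mzero Mh = (\<lambda>m. Q m)"
  "madd Mh x y = (\<lambda>m. {a \<oplus> b | a b. a \<in> x m \<and> b \<in> y m})"
  "mneg Mh x = (\<lambda>m. ng ` x m)"
  "msmult Mh r x = (\<lambda>m. {r \<odot> a \<oplus> b | a b. a \<in> x m \<and> b \<in> Q m})"
  by (simp_all add: completion_def)

lemma lev_mono: "x \<in> carrier Mh \<Longrightarrow> k \<le> m \<Longrightarrow> x m \<subseteq> x k"
proof (induction m)
  case 0 then show ?case by simp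
next
  case (Suc m)
  show ?case
  proof (cases "k = Suc m")
    case False
    then have "x m \<subseteq> x k" using Suc by simp
    moreover have "x (Suc m) \<subseteq> x m" using Suc.prems compl_carrier by blast
    ultimately show ?thesis by blast
  qed simp
qed

lemma lev_ex: "x \<in> carrier Mh \<Longrightarrow> \<exists>a. a \<in> C \<and> a \<in> x m"
proof -
  assume "x \<in> carrier Mh"
  then obtain a where "a \<in> C" "x m = coset M a (Q m)" unfolding compl_carrier by blast
  then show ?thesis using coset_mem[OF Q_sub[of m]] by blast
qed

lemma lev_eq: "x \<in> carrier Mh \<Longrightarrow> a \<in> x m \<Longrightarrow> x m = coset M a (Q m)"
proof -
  assume x: "x \<in> carrier Mh" and a: "a \<in> x m"
  obtain b where b: "b \<in> C" "x m = coset M b (Q m)" using x unfolding compl_carrier by blast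
  show ?thesis using coset_eq[OF Q_sub[of m] b(1), of a] a b by simp
qed

lemma lev_sub: "x \<in> carrier Mh \<Longrightarrow> x m \<subseteq> C"
proof -
  assume x: "x \<in> carrier Mh"
  obtain b where b: "b \<in> C" "x m = coset M b (Q m)" using x unfolding compl_carrier by blast
  show ?thesis using coset_sub[OF Q_sub[of m] b(1)] b by simp
qed

lemma lev_C: "x \<in> carrier Mh \<Longrightarrow> a \<in> x m \<Longrightarrow> a \<in> C"
  using lev_sub by blast

lemma add_lev: "x \<in> carrier Mh \<Longrightarrow> y \<in> carrier Mh \<Longrightarrow> a \<in> x m \<Longrightarrow> b \<in> y m \<Longrightarrow>
   madd Mh x y m = coset M (a \<oplus> b) (Q m)"
proof -
  assume x: "x \<in> carrier Mh" and y: "y \<in> carrier Mh" and a: "a \<in> x m" and b: "b \<in> y m"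
  have "madd Mh x y m = {u \<oplus> v |u v. u \<in> x m \<and> v \<in> y m}" by (simp add: compl_ops)
  also have "\<dots> = {u \<oplus> v |u v. u \<in> coset M a (Q m) \<and> v \<in> coset M b (Q m)}"
    using lev_eq[OF x a] lev_eq[OF y b] by simp
  also have "\<dots> = coset M (a \<oplus> b) (Q m)"
    by (rule coset_sum[OF Q_sub lev_C[OF x a] lev_C[OF y b]])
  finally show ?thesis .
qed

lemma sm_lev: "x \<in> carrier Mh \<Longrightarrow> a \<in> x m \<Longrightarrow> msmult Mh r x m = coset M (r \<odot> a) (Q m)"
proof -
  assume x: "x \<in> carrier Mh" and a: "a \<in> x m"
  have "msmult Mh r x m = {r \<odot> u \<oplus> v |u v. u \<in> x m \<and> v \<in> Q m}" by (simp add: compl_ops)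
  also have "\<dots> = {r \<odot> u \<oplus> v |u v. u \<in> coset M a (Q m) \<and> v \<in> Q m}"
    using lev_eq[OF x a] by simp
  also have "\<dots> = coset M (r \<odot> a) (Q m)"
    by (rule coset_smult[OF Q_sub lev_C[OF x a]])
  finally show ?thesis .
qed

lemma neg_lev: "x \<in> carrier Mh \<Longrightarrow> a \<in> x m \<Longrightarrow> mneg Mh x m = coset M (ng a) (Q m)"
proof -
  assume x: "x \<in> carrier Mh" and a: "a \<in> x m"
  have "mneg Mh x m = ng ` coset M a (Q m)" using lev_eq[OF x a] by (simp add: compl_ops)
  also have "\<dots> = coset M (ng a) (Q m)" by (rule coset_neg[OF Q_sub lev_C[OF x a]])
  finally show ?thesis .
qed

lemma zero_lev: "mzero Mh m = coset M z0 (Q m)"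
  using coset_zero[OF Q_sub[of m]] by (simp add: compl_ops)

lemma coset_in: "a \<in> C \<Longrightarrow> a \<in> coset M a (Q m)"
  using coset_mem[OF Q_sub] by blast

lemma cemb_lev: "cemb s M a m = coset M a (Q m)"
  by (simp add: cemb_def)

lemma cemb_c: "a \<in> C \<Longrightarrow> cemb s M a \<in> carrier Mh"
  unfolding compl_carrier cemb_def
  using coset_mono[OF Q_mono] by (auto simp: le_Suc_eq)

lemma zero_cc: "mzero Mh \<in> carrier Mh"
  unfolding compl_carrier
proof (intro conjI allI)
  fix m show "\<exists>a\<in>C. mzero Mh m = coset M a (Q m)" using zero_lev zero_c by blast
  show "mzero Mh (Suc m) \<subseteq> mzero Mh m" using Q_mono[of m "Suc m"] by (simp add: compl_ops)
qed

lemma add_cc: "x \<in> carrier Mh \<Longrightarrow> y \<in> carrier Mh \<Longrightarrow> madd Mh x y \<in> carrier Mh"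
proof -
  assume x: "x \<in> carrier Mh" and y: "y \<in> carrier Mh"
  have "\<forall>m. \<exists>a\<in>C. madd Mh x y m = coset M a (Q m)"
  proof
    fix m
    obtain a b where "a \<in> C" "a \<in> x m" "b \<in> C" "b \<in> y m" using lev_ex x y by metis
    then show "\<exists>a\<in>C. madd Mh x y m = coset M a (Q m)" using add_lev[OF x y] by auto
  qed
  moreover have "\<forall>m. madd Mh x y (Suc m) \<subseteq> madd Mh x y m"
  proof
    fix m
    have "x (Suc m) \<subseteq> x m" "y (Suc m) \<subseteq> y m" using x y unfolding compl_carrier by blast+
    then show "madd Mh x y (Suc m) \<subseteq> madd Mh x y m" unfolding compl_ops by blast
  qed
  ultimately show ?thesis unfolding compl_carrier by blast
qed

lemma neg_cc: "x \<in> carrier Mh \<Longrightarrow> mneg Mh x \<in> carrier Mh"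
proof -
  assume x: "x \<in> carrier Mh"
  have "\<forall>m. \<exists>a\<in>C. mneg Mh x m = coset M a (Q m)"
  proof
    fix m
    obtain a where "a \<in> C" "a \<in> x m" using lev_ex x by metis
    then show "\<exists>a\<in>C. mneg Mh x m = coset M a (Q m)" using neg_lev[OF x] by auto
  qed
  moreover have "\<forall>m. mneg Mh x (Suc m) \<subseteq> mneg Mh x m"
  proof
    fix m
    have "x (Suc m) \<subseteq> x m" using x unfolding compl_carrier by blast
    then show "mneg Mh x (Suc m) \<subseteq> mneg Mh x m" unfolding compl_ops by blast
  qed
  ultimately show ?thesis unfolding compl_carrier by blast
qed

lemma sm_cc: "x \<in> carrier Mh \<Longrightarrow> msmult Mh r x \<in> carrier Mh"
proof -
  assume x: "x \<in> carrier Mh"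
  have "\<forall>m. \<exists>a\<in>C. msmult Mh r x m = coset M a (Q m)"
  proof
    fix m
    obtain a where "a \<in> C" "a \<in> x m" using lev_ex x by metis
    then show "\<exists>a\<in>C. msmult Mh r x m = coset M a (Q m)" using sm_lev[OF x] by auto
  qed
  moreover have "\<forall>m. msmult Mh r x (Suc m) \<subseteq> msmult Mh r x m"
  proof
    fix m
    have "x (Suc m) \<subseteq> x m" using x unfolding compl_carrier by blast
    moreover have "Q (Suc m) \<subseteq> Q m" using Q_mono by simp
    ultimately show "msmult Mh r x (Suc m) \<subseteq> msmult Mh r x m" unfolding compl_ops by blast
  qed
  ultimately show ?thesis unfolding compl_carrier by blast
qed

definition rep :: "(nat \<Rightarrow> 'm set) \<Rightarrow> nat \<Rightarrow> 'm" where
  "rep x m = (SOME a. a \<in> C \<and> a \<in> x m)"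

lemma rep: "x \<in> carrier Mh \<Longrightarrow> rep x m \<in> C \<and> rep x m \<in> x m"
  unfolding rep_def using lev_ex[of x m] by (rule someI_ex)

lemma add_rep: "x \<in> carrier Mh \<Longrightarrow> y \<in> carrier Mh \<Longrightarrow> madd Mh x y m = coset M (rep x m \<oplus> rep y m) (Q m)"
  using add_lev rep by blast
lemma sm_rep: "x \<in> carrier Mh \<Longrightarrow> msmult Mh r x m = coset M (r \<odot> rep x m) (Q m)"
  using sm_lev rep by blast
lemma neg_rep: "x \<in> carrier Mh \<Longrightarrow> mneg Mh x m = coset M (ng (rep x m)) (Q m)"
  using neg_lev rep by blast
lemma lev_rep: "x \<in> carrier Mh \<Longrightarrow> x m = coset M (rep x m) (Q m)"
  using lev_eq rep by blast

lemma compl_is_rmod: "is_rmod Mh"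
  unfolding is_rmod_def
proof (intro conjI ballI allI)
  show "mzero Mh \<in> carrier Mh" by (rule zero_cc)
next
  fix x y assume "x \<in> carrier Mh" "y \<in> carrier Mh" then show "madd Mh x y \<in> carrier Mh" by (rule add_cc)
next
  fix x assume "x \<in> carrier Mh" then show "mneg Mh x \<in> carrier Mh" by (rule neg_cc)
next
  fix r x assume "x \<in> carrier Mh" then show "msmult Mh r x \<in> carrier Mh" by (rule sm_cc)
next
  fix x y z assume x: "x \<in> carrier Mh" and y: "y \<in> carrier Mh" and z: "z \<in> carrier Mh"
  show "madd Mh (madd Mh x y) z = madd Mh x (madd Mh y z)"
  proof
    fix m
    let ?a = "rep x m" and ?b = "rep y m" and ?c = "rep z m"
    have r: "?a \<in> C" "?a \<in> x m" "?b \<in> C" "?b \<in> y m" "?c \<in> C" "?c \<in> z m" using rep x y z by auto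
    have "madd Mh x y m = coset M (?a \<oplus> ?b) (Q m)" using add_lev x y r by blast
    then have "?a \<oplus> ?b \<in> madd Mh x y m" using coset_in r by simp
    then have 1: "madd Mh (madd Mh x y) z m = coset M ((?a \<oplus> ?b) \<oplus> ?c) (Q m)"
      using add_lev[OF add_cc[OF x y] z] r by blast
    have "madd Mh y z m = coset M (?b \<oplus> ?c) (Q m)" using add_lev y z r by blast
    then have "?b \<oplus> ?c \<in> madd Mh y z m" using coset_in r by simp
    then have 2: "madd Mh x (madd Mh y z) m = coset M (?a \<oplus> (?b \<oplus> ?c)) (Q m)"
      using add_lev[OF x add_cc[OF y z]] r by blast
    show "madd Mh (madd Mh x y) z m = madd Mh x (madd Mh y z) m" using 1 2 assoc r by simp
  qed
next
  fix x y assume x: "x \<in> carrier Mh" and y: "y \<in> carrier Mh"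
  show "madd Mh x y = madd Mh y x"
  proof
    fix m
    have "rep x m \<oplus> rep y m = rep y m \<oplus> rep x m" using comm rep x y by blast
    then show "madd Mh x y m = madd Mh y x m" using add_rep[OF x y] add_rep[OF y x] by simp
  qed
next
  fix x assume x: "x \<in> carrier Mh"
  show "madd Mh (mzero Mh) x = x"
  proof
    fix m
    have "z0 \<in> mzero Mh m" using zero_lev coset_in by simp
    then show "madd Mh (mzero Mh) x m = x m"
      using add_lev[OF zero_cc x, of z0 m "rep x m"] rep[OF x] lev_rep[OF x] by simp
  qed
next
  fix x assume x: "x \<in> carrier Mh"
  show "madd Mh (mneg Mh x) x = mzero Mh"
  proof
    fix m
    have "ng (rep x m) \<in> mneg Mh x m" using neg_rep[OF x] coset_in rep[OF x] by simp
    then show "madd Mh (mneg Mh x) x m = mzero Mh m"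
      using add_lev[OF neg_cc[OF x] x, of "ng (rep x m)" m "rep x m"] rep[OF x] zero_lev by simp
  qed
next
  fix r x y assume x: "x \<in> carrier Mh" and y: "y \<in> carrier Mh"
  show "msmult Mh r (madd Mh x y) = madd Mh (msmult Mh r x) (msmult Mh r y)"
  proof
    fix m
    let ?a = "rep x m" and ?b = "rep y m"
    have r: "?a \<in> C" "?a \<in> x m" "?b \<in> C" "?b \<in> y m" using rep x y by auto
    have "?a \<oplus> ?b \<in> madd Mh x y m" using add_lev[OF x y] r coset_in by simp
    then have 1: "msmult Mh r (madd Mh x y) m = coset M (r \<odot> (?a \<oplus> ?b)) (Q m)"
      using sm_lev[OF add_cc[OF x y]] by blast
    have "r \<odot> ?a \<in> msmult Mh r x m" "r \<odot> ?b \<in> msmult Mh r y m"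
      using sm_lev[OF x] sm_lev[OF y] r coset_in by auto
    then have 2: "madd Mh (msmult Mh r x) (msmult Mh r y) m = coset M (r \<odot> ?a \<oplus> r \<odot> ?b) (Q m)"
      using add_lev[OF sm_cc[OF x] sm_cc[OF y]] by blast
    show "msmult Mh r (madd Mh x y) m = madd Mh (msmult Mh r x) (msmult Mh r y) m"
      using 1 2 sm_add r by simp
  qed
next
  fix r t x assume x: "x \<in> carrier Mh"
  show "msmult Mh (r + t) x = madd Mh (msmult Mh r x) (msmult Mh t x)"
  proof
    fix m
    let ?a = "rep x m"
    have r: "?a \<in> C" "?a \<in> x m" using rep x by auto
    have "r \<odot> ?a \<in> msmult Mh r x m" "t \<odot> ?a \<in> msmult Mh t x m"
      using sm_lev[OF x] r coset_in by auto
    then have 2: "madd Mh (msmult Mh r x) (msmult Mh t x) m = coset M (r \<odot> ?a \<oplus> t \<odot> ?a) (Q m)"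
      using add_lev[OF sm_cc[OF x] sm_cc[OF x]] by blast
    show "msmult Mh (r + t) x m = madd Mh (msmult Mh r x) (msmult Mh t x) m"
      using 2 sm_lev[OF x r(2)] add_sm r by simp
  qed
next
  fix r t x assume x: "x \<in> carrier Mh"
  show "msmult Mh (r * t) x = msmult Mh r (msmult Mh t x)"
  proof
    fix m
    let ?a = "rep x m"
    have r: "?a \<in> C" "?a \<in> x m" using rep x by auto
    have "t \<odot> ?a \<in> msmult Mh t x m" using sm_lev[OF x] r coset_in by auto
    then have 2: "msmult Mh r (msmult Mh t x) m = coset M (r \<odot> (t \<odot> ?a)) (Q m)"
      using sm_lev[OF sm_cc[OF x]] by blast
    show "msmult Mh (r * t) x m = msmult Mh r (msmult Mh t x) m"
      using 2 sm_lev[OF x r(2)] sm_sm r by simp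
  qed
next
  fix x assume x: "x \<in> carrier Mh"
  show "msmult Mh 1 x = x"
  proof
    fix m
    show "msmult Mh 1 x m = x m" using sm_rep[OF x] lev_rep[OF x] rep[OF x] by simp
  qed
qed

lemma LV: "u \<in> carrier Mh \<Longrightarrow> z \<in> carrier Mh \<Longrightarrow> madd Mh u (msmult Mh (qmul s n) z) n = u n"
proof -
  assume u: "u \<in> carrier Mh" and z: "z \<in> carrier Mh"
  let ?a = "rep u n" and ?c = "rep z n"
  have r: "?a \<in> C" "?a \<in> u n" "?c \<in> C" "?c \<in> z n" using rep u z by auto
  have "qmul s n \<odot> ?c \<in> msmult Mh (qmul s n) z n" using sm_lev[OF z r(4)] coset_in r by simp
  then have "madd Mh u (msmult Mh (qmul s n) z) n = coset M (?a \<oplus> qmul s n \<odot> ?c) (Q n)"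
    using add_lev[OF u sm_cc[OF z] r(2)] by blast
  also have "\<dots> = coset M ?a (Q n)" using coset_absorb r Q_in by blast
  also have "\<dots> = u n" using lev_eq[OF u r(2)] by simp
  finally show ?thesis .
qed

end



context rm begin

definition SC :: "'m set \<Rightarrow> (nat \<Rightarrow> 'm set) set" where
  "SC E = {y \<in> carrier Mh. \<forall>m. \<exists>a\<in>E. a \<in> y m}"

lemma coset_sum_sub:
  assumes N: "submodule M N" and N': "N' \<subseteq> N" "z0 \<in> N'" and a: "a \<in> C"
  shows "{u \<oplus> b |u b. u \<in> coset M a N' \<and> b \<in> N} = coset M a N"
proof (intro set_eqI iffI)
  fix x assume "x \<in> {u \<oplus> b |u b. u \<in> coset M a N' \<and> b \<in> N}"
  then obtain n1 n2 where n: "n1 \<in> N'" "n2 \<in> N" "x = (a \<oplus> n1) \<oplus> n2" by (auto simp: coset_def)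
  have c: "n1 \<in> C" "n2 \<in> C" using n N' subm_props(1)[OF N] by auto
  have "x = a \<oplus> (n1 \<oplus> n2)" using n c a assoc by simp
  then show "x \<in> coset M a N" using n N' subm_props(3)[OF N] by (auto simp: coset_def)
next
  fix x assume "x \<in> coset M a N"
  then obtain n where n: "n \<in> N" "x = a \<oplus> n" by (auto simp: coset_def)
  have "x = (a \<oplus> z0) \<oplus> n" using n a by simp
  moreover have "a \<oplus> z0 \<in> coset M a N'" using N' by (auto simp: coset_def)
  ultimately show "x \<in> {u \<oplus> b |u b. u \<in> coset M a N' \<and> b \<in> N}" using n by blast
qed

lemma SC_char:
  assumes E: "submodule M E"
    and pE: "\<And>m a. a \<in> E \<Longrightarrow> a \<in> Q m \<Longrightarrow> \<exists>c\<in>E. a = qmul s m \<odot> c"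
  shows "sub_completion s M E = SC E"
proof
  have EC: "E \<subseteq> C" using subm_props(1)[OF E] .
  have QE: "\<And>m. qsub s (submod M E) m \<subseteq> Q m" "\<And>m. z0 \<in> qsub s (submod M E) m"
    using EC subm_props(2)[OF E] by (auto simp: qsub_def image_iff intro!: bexI[of _ z0])
  show "sub_completion s M E \<subseteq> SC E"
  proof
    fix y assume "y \<in> sub_completion s M E"
    then obtain z where z: "z \<in> carrier (completion s (submod M E))" and y: "y = compl_incl s M z"
      by (auto simp: sub_completion_def)
    have zc: "\<forall>m. \<exists>a\<in>E. z m = coset M a (qsub s (submod M E) m)" "\<forall>m. z (Suc m) \<subseteq> z m"
      using z by (auto simp: completion_def coset_def)
    have ym: "\<exists>a\<in>E. y m = coset M a (Q m)" for m
    proof -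
      obtain a where a: "a \<in> E" "z m = coset M a (qsub s (submod M E) m)" using zc by blast
      have "y m = {u \<oplus> b |u b. u \<in> coset M a (qsub s (submod M E) m) \<and> b \<in> Q m}"
        using y a by (simp add: compl_incl_def)
      also have "\<dots> = coset M a (Q m)" using coset_sum_sub[OF Q_sub QE] a EC by blast
      finally show ?thesis using a by blast
    qed
    have yc: "y \<in> carrier Mh"
      unfolding compl_carrier
    proof (intro conjI allI)
      fix m show "\<exists>a\<in>C. y m = coset M a (Q m)" using ym EC by blast
      have "z (Suc m) \<subseteq> z m" "Q (Suc m) \<subseteq> Q m" using zc Q_mono by auto
      then show "y (Suc m) \<subseteq> y m" unfolding y compl_incl_def by blast
    qed
    have "\<forall>m. \<exists>a\<in>E. a \<in> y m" using ym coset_in EC by blast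
    then show "y \<in> SC E" using yc by (simp add: SC_def)
  qed
next
  have EC: "E \<subseteq> C" using subm_props(1)[OF E] .
  have QE: "\<And>m. qsub s (submod M E) m \<subseteq> Q m" "\<And>m. z0 \<in> qsub s (submod M E) m"
    using EC subm_props(2)[OF E] by (auto simp: qsub_def image_iff intro!: bexI[of _ z0])
  show "SC E \<subseteq> sub_completion s M E"
  proof
    fix y assume "y \<in> SC E"
    then have yc: "y \<in> carrier Mh" and ya: "\<forall>m. \<exists>a\<in>E. a \<in> y m" by (auto simp: SC_def)
    define a where "a m = (SOME a. a \<in> E \<and> a \<in> y m)" for m
    have a: "a m \<in> E" "a m \<in> y m" for m using someI_ex[of "\<lambda>a. a \<in> E \<and> a \<in> y m"] ya a_def by auto
    have aC: "a m \<in> C" for m using a EC by auto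
    define z where "z m = coset M (a m) (qsub s (submod M E) m)" for m
    have zc: "z \<in> carrier (completion s (submod M E))"
    proof -
      have "z (Suc m) \<subseteq> z m" for m
      proof
        fix x assume "x \<in> z (Suc m)"
        then obtain e' where e': "e' \<in> E" "x = a (Suc m) \<oplus> qmul s (Suc m) \<odot> e'"
          by (auto simp: z_def coset_def qsub_def)
        have "a (Suc m) \<in> y m" using a(2)[of "Suc m"] lev_mono[OF yc, of m "Suc m"] by auto
        then have "a (Suc m) \<in> coset M (a m) (Q m)" using lev_eq[OF yc a(2)[of m]] by simp
        then obtain u where u: "u \<in> Q m" "a (Suc m) = a m \<oplus> u" by (auto simp: coset_def)
        have uC: "u \<in> C" using u Q_C by auto
        have "u = ng (a m) \<oplus> a (Suc m)" using u uC aC sub_cancel2 by simp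
        then have "u \<in> E" using subm_props(3,4)[OF E] a by simp
        then obtain e where e: "e \<in> E" "u = qmul s m \<odot> e" using pE u by blast
        have eC: "e \<in> C" "e' \<in> C" using e e' EC by auto
        have "x = a m \<oplus> (qmul s m \<odot> e \<oplus> qmul s m \<odot> (s m \<odot> e'))"
          using e' u e eC aC by (simp add: qmul_Suc sm_sm assoc)
        also have "\<dots> = a m \<oplus> qmul s m \<odot> (e \<oplus> s m \<odot> e')" using eC by (simp add: sm_add)
        finally have "x = a m \<oplus> qmul s m \<odot> (e \<oplus> s m \<odot> e')" .
        moreover have "e \<oplus> s m \<odot> e' \<in> E" using subm_props(3,5)[OF E] e e' by simp
        ultimately show "x \<in> z m" by (auto simp: z_def coset_def qsub_def)
      qed
      then show ?thesis using a(1) by (auto simp: completion_def z_def coset_def)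
    qed
    have "compl_incl s M z = y"
    proof
      fix m
      have "compl_incl s M z m = {u \<oplus> b |u b. u \<in> coset M (a m) (qsub s (submod M E) m) \<and> b \<in> Q m}"
        by (simp add: compl_incl_def z_def)
      also have "\<dots> = coset M (a m) (Q m)" using coset_sum_sub[OF Q_sub QE aC] by blast
      also have "\<dots> = y m" using lev_eq[OF yc a(2)] by simp
      finally show "compl_incl s M z m = y m" .
    qed
    then show "y \<in> sub_completion s M E" using zc by (auto simp: sub_completion_def)
  qed
qed

lemma SC_sub: "SC E \<subseteq> carrier Mh" by (auto simp: SC_def)

lemma SC_closed:
  assumes E: "submodule M E"
  shows "mzero Mh \<in> SC E"
    "x \<in> SC E \<Longrightarrow> y \<in> SC E \<Longrightarrow> madd Mh x y \<in> SC E"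
    "x \<in> SC E \<Longrightarrow> mneg Mh x \<in> SC E"
    "x \<in> SC E \<Longrightarrow> msmult Mh r x \<in> SC E"
    "e \<in> E \<Longrightarrow> cemb s M e \<in> SC E"
proof -
  have EC: "E \<subseteq> C" using subm_props(1)[OF E] .
  show "mzero Mh \<in> SC E" unfolding SC_def using zero_cc subm_props(2)[OF E] subm_props(2)[OF Q_sub]
    by (auto simp: compl_ops)
  show "x \<in> SC E \<Longrightarrow> y \<in> SC E \<Longrightarrow> madd Mh x y \<in> SC E"
  proof -
    assume x: "x \<in> SC E" and y: "y \<in> SC E"
    have "\<exists>c\<in>E. c \<in> madd Mh x y m" for m
    proof -
      obtain a where "a \<in> E" "a \<in> x m" using x unfolding SC_def by blast
      moreover obtain b where "b \<in> E" "b \<in> y m" using y unfolding SC_def by blast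
      ultimately show ?thesis using subm_props(3)[OF E] by (auto simp: compl_ops)
    qed
    then show ?thesis using add_cc x y by (auto simp: SC_def)
  qed
  show "x \<in> SC E \<Longrightarrow> mneg Mh x \<in> SC E"
  proof -
    assume x: "x \<in> SC E"
    have "\<exists>c\<in>E. c \<in> mneg Mh x m" for m
    proof -
      obtain a where "a \<in> E" "a \<in> x m" using x by (auto simp: SC_def)
      then show ?thesis using subm_props(4)[OF E] by (auto simp: compl_ops)
    qed
    then show ?thesis using neg_cc x by (auto simp: SC_def)
  qed
  show "x \<in> SC E \<Longrightarrow> msmult Mh r x \<in> SC E"
  proof -
    assume x: "x \<in> SC E"
    have "\<exists>c\<in>E. c \<in> msmult Mh r x m" for m
    proof -
      obtain a where a: "a \<in> E" "a \<in> x m" using x by (auto simp: SC_def)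
      have "r \<odot> a \<oplus> z0 \<in> msmult Mh r x m" using a subm_props(2)[OF Q_sub] by (auto simp: compl_ops)
      moreover have "r \<odot> a \<oplus> z0 = r \<odot> a" using a EC by auto
      ultimately show ?thesis using subm_props(5)[OF E] a by metis
    qed
    then show ?thesis using sm_cc x by (auto simp: SC_def)
  qed
  show "e \<in> E \<Longrightarrow> cemb s M e \<in> SC E"
  proof -
    assume e: "e \<in> E"
    then have eC: "e \<in> C" using EC by auto
    have "\<forall>m. \<exists>a\<in>E. a \<in> cemb s M e m" using coset_in[OF eC] e by (auto simp: cemb_lev)
    then show ?thesis using cemb_c[OF eC] by (simp add: SC_def)
  qed
qed

lemma DIV:
  assumes mc: "mult_closed_seq s"
    and tf: "\<And>n x. x \<in> C \<Longrightarrow> qmul s n \<odot> x = z0 \<Longrightarrow> x = z0"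
    and E: "submodule M E"
    and pE: "\<And>m a. a \<in> E \<Longrightarrow> a \<in> Q m \<Longrightarrow> \<exists>c\<in>E. a = qmul s m \<odot> c"
    and t: "t \<in> SC E" and tn: "t n = Q n"
  shows "\<exists>z\<in>SC E. t = msmult Mh (qmul s n) z"
proof -
  have EC: "E \<subseteq> C" using subm_props(1)[OF E] .
  have tc: "t \<in> carrier Mh" and ta: "\<forall>m. \<exists>a\<in>E. a \<in> t m" using t by (auto simp: SC_def)
  define a where "a m = (SOME a. a \<in> E \<and> a \<in> t m)" for m
  have a: "a m \<in> E" "a m \<in> t m" for m using someI_ex[of "\<lambda>a. a \<in> E \<and> a \<in> t m"] ta a_def by auto
  have aC: "a m \<in> C" for m using a EC by auto
  have aQ: "m \<ge> n \<Longrightarrow> a m \<in> Q n" for m using a(2)[of m] lev_mono[OF tc, of n m] tn by auto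
  define b where "b m = (SOME c. c \<in> E \<and> a m = qmul s n \<odot> c)" for m
  have b: "m \<ge> n \<Longrightarrow> b m \<in> E \<and> a m = qmul s n \<odot> b m" for m
  proof -
    assume "m \<ge> n"
    then have "\<exists>c. c \<in> E \<and> a m = qmul s n \<odot> c" using pE[OF a(1) aQ] by blast
    then show ?thesis unfolding b_def by (rule someI_ex)
  qed
  have bC: "m \<ge> n \<Longrightarrow> b m \<in> C" for m using b EC by auto
  have KEY: "b m' \<in> coset M (b m) (Q k)"
    if N: "qmul s n * qmul s k dvd qmul s N" "N \<ge> n" "m \<ge> N" "m' \<ge> N" for N m m' k
  proof -
    have mn: "m \<ge> n" "m' \<ge> n" using that by auto
    have "a m' \<in> t N" "a m \<in> t N" using a lev_mono[OF tc] that by blast+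
    then have "a m' \<in> coset M (a m) (Q N)" using lev_eq[OF tc] by blast
    then obtain u where u: "u \<in> Q N" "a m' = a m \<oplus> u" by (auto simp: coset_def)
    obtain c0 where c0: "c0 \<in> C" "u = qmul s N \<odot> c0" using u by (auto simp: qsub_def)
    obtain d where d: "qmul s N = qmul s n * qmul s k * d" using N(1) by (auto simp: dvd_def)
    define v where "v = qmul s k \<odot> (d \<odot> c0)"
    have vC: "v \<in> C" using c0 v_def by simp
    have vQ: "v \<in> Q k" using c0 by (simp add: v_def qsub_def)
    have "u = qmul s n \<odot> v" using c0 d by (simp add: v_def sm_sm[symmetric] mult.assoc)
    then have "qmul s n \<odot> b m' = qmul s n \<odot> (b m \<oplus> v)"
      using u b mn vC bC by (simp add: sm_add)
    then have "qmul s n \<odot> (ng (b m \<oplus> v) \<oplus> b m') = z0"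
      using bC mn vC by (simp add: sm_add sm_neg)
    then have "ng (b m \<oplus> v) \<oplus> b m' = z0" using tf bC mn vC by simp
    then have "b m' = b m \<oplus> v"
      using bC mn vC by (metis add_c neg_c neg_neg neg_unique)
    then show ?thesis using vQ by (auto simp: coset_def)
  qed
  define Mk where "Mk k = (SOME M. M \<ge> max n k \<and> qmul s n * qmul s k dvd qmul s M)" for k
  have Mk: "Mk k \<ge> max n k \<and> qmul s n * qmul s k dvd qmul s (Mk k)" for k
    unfolding Mk_def by (rule someI_ex) (use qmul_cofinal[OF mc] in blast)
  define z where "z k = coset M (b (Mk k)) (Q k)" for k
  have zb: "b (Mk k) \<in> z k" "b (Mk k) \<in> E" for k
    using coset_in bC b Mk by (auto simp: z_def)
  have zc: "z \<in> carrier Mh"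
    unfolding compl_carrier
  proof (intro conjI allI)
    fix k show "\<exists>a\<in>C. z k = coset M a (Q k)" using bC Mk z_def by auto
    let ?N = "min (Mk k) (Mk (Suc k))"
    have "qmul s k dvd qmul s (Suc k)" by (simp add: qmul_Suc)
    then have "qmul s n * qmul s k dvd qmul s (Mk (Suc k))" using Mk[of "Suc k"] by (metis dvd_mult_left dvd_trans mult_dvd_mono dvd_refl)
    then have dv: "qmul s n * qmul s k dvd qmul s ?N" using Mk[of k] by (simp add: min_def)
    have "b (Mk (Suc k)) \<in> coset M (b (Mk k)) (Q k)"
      by (rule KEY[OF dv]) (use Mk[of k] Mk[of "Suc k"] in auto)
    moreover have "n \<le> Mk k" using Mk[of k] by simp
    ultimately have "coset M (b (Mk (Suc k))) (Q k) = z k"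
      unfolding z_def using coset_eq[OF Q_sub bC[of "Mk k"]] by blast
    moreover have "z (Suc k) \<subseteq> coset M (b (Mk (Suc k))) (Q k)"
      unfolding z_def by (rule coset_mono[OF Q_mono]) simp
    ultimately show "z (Suc k) \<subseteq> z k" by simp
  qed
  have "t = msmult Mh (qmul s n) z"
  proof
    fix k
    have "msmult Mh (qmul s n) z k = coset M (qmul s n \<odot> b (Mk k)) (Q k)" using sm_lev[OF zc zb(1)] by simp
    also have "\<dots> = coset M (a (Mk k)) (Q k)" using b[of "Mk k"] Mk by simp
    also have "\<dots> = t k" using lev_eq[OF tc, of "a (Mk k)" k] a(2)[of "Mk k"] lev_mono[OF tc, of k "Mk k"] Mk by auto
    finally show "t k = msmult Mh (qmul s n) z k" by simp
  qed
  moreover have "z \<in> SC E" using zc zb by (auto simp: SC_def)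
  ultimately show ?thesis by blast
qed

end


lemma prodmod_gen[simp]:
  "madd (prodmod M N) p q = (madd M (fst p) (fst q), madd N (snd p) (snd q))"
  "mneg (prodmod M N) p = (mneg M (fst p), mneg N (snd p))"
  "msmult (prodmod M N) r p = (msmult M r (fst p), msmult N r (snd p))"
  by (cases p; cases q; simp add: prodmod_def)+

lemma prodmod_submod: "prodmod A (submod B N) = submod (prodmod A B) (carrier A \<times> N)"
  by (simp add: prodmod_def submod_def)

lemma submodule_submod: "submodule (submod M S) N \<Longrightarrow> S \<subseteq> carrier M \<Longrightarrow> submodule M N"
  by (auto simp: submodule_def)

lemma prodmod_is_rmod:
  assumes a: "is_rmod A" and b: "is_rmod B" shows "is_rmod (prodmod A B)"
proof -
  interpret A: rm A undefined using a by unfold_locales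
  interpret B: rm B undefined using b by unfold_locales
  show ?thesis unfolding is_rmod_def
  proof (intro conjI ballI allI)
    fix x y z assume "x \<in> carrier (prodmod A B)" "y \<in> carrier (prodmod A B)" "z \<in> carrier (prodmod A B)"
    then show "madd (prodmod A B) (madd (prodmod A B) x y) z = madd (prodmod A B) x (madd (prodmod A B) y z)"
      by (auto simp: A.assoc B.assoc mem_Times_iff)
  next
    fix x y assume "x \<in> carrier (prodmod A B)" "y \<in> carrier (prodmod A B)"
    then show "madd (prodmod A B) x y = madd (prodmod A B) y x"
      using A.comm[of "fst x" "fst y"] B.comm[of "snd x" "snd y"] by (auto simp: mem_Times_iff)
  next
    fix r x y assume "x \<in> carrier (prodmod A B)" "y \<in> carrier (prodmod A B)"
    then show "msmult (prodmod A B) r (madd (prodmod A B) x y) =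
      madd (prodmod A B) (msmult (prodmod A B) r x) (msmult (prodmod A B) r y)"
      by (auto simp: A.sm_add B.sm_add mem_Times_iff)
  next
    fix r t x assume "x \<in> carrier (prodmod A B)"
    then show "msmult (prodmod A B) (r + t) x = madd (prodmod A B) (msmult (prodmod A B) r x) (msmult (prodmod A B) t x)"
      by (auto simp: A.add_sm B.add_sm mem_Times_iff)
  next
    fix r t x assume "x \<in> carrier (prodmod A B)"
    then show "msmult (prodmod A B) (r * t) x = msmult (prodmod A B) r (msmult (prodmod A B) t x)"
      by (auto simp: A.sm_sm B.sm_sm mem_Times_iff)
  qed (auto simp: mem_Times_iff)
qed

lemma freemod_simps:
  "carrier (freemod :: ('r::comm_ring_1, 'k list \<Rightarrow> 'r) rmod) = {f. finite {t. f t \<noteq> 0}}"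
  "mzero (freemod :: ('r::comm_ring_1, 'k list \<Rightarrow> 'r) rmod) = (\<lambda>t. 0)"
  "madd (freemod :: ('r::comm_ring_1, 'k list \<Rightarrow> 'r) rmod) = (\<lambda>f g t. f t + g t)"
  "mneg (freemod :: ('r::comm_ring_1, 'k list \<Rightarrow> 'r) rmod) = (\<lambda>f t. - f t)"
  "msmult (freemod :: ('r::comm_ring_1, 'k list \<Rightarrow> 'r) rmod) = (\<lambda>r f t. r * f t)"
  by (simp_all add: freemod_def)

lemma freemod_is_rmod: "is_rmod (freemod :: ('r::comm_ring_1, 'k list \<Rightarrow> 'r) rmod)"
  unfolding is_rmod_def freemod_simps
proof (intro conjI ballI allI)
  fix x y :: "'k list \<Rightarrow> 'r" assume "x \<in> {f. finite {t. f t \<noteq> 0}}" "y \<in> {f. finite {t. f t \<noteq> 0}}"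
  then show "(\<lambda>t. x t + y t) \<in> {f. finite {t. f t \<noteq> 0}}"
    by (auto intro: finite_subset[of _ "{t. x t \<noteq> 0} \<union> {t. y t \<noteq> 0}"])
next
  fix r and x :: "'k list \<Rightarrow> 'r" assume "x \<in> {f. finite {t. f t \<noteq> 0}}"
  then show "(\<lambda>t. r * x t) \<in> {f. finite {t. f t \<noteq> 0}}"
    by (auto intro: finite_subset[of _ "{t. x t \<noteq> 0}"])
qed (auto simp: algebra_simps)

context rm begin

lemma alg1:
  assumes c: "d \<in> C" "d' \<in> C" "w \<in> C" "w' \<in> C" and h: "d \<oplus> r \<odot> w = d' \<oplus> r \<odot> w'"
  shows "d \<oplus> ng d' = r \<odot> (w' \<oplus> ng w)"
proof -
  have "d = (d \<oplus> r \<odot> w) \<oplus> ng (r \<odot> w)" using c by (simp add: assoc)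
  also have "\<dots> = (d' \<oplus> r \<odot> w') \<oplus> ng (r \<odot> w)" using h by simp
  also have "\<dots> = d' \<oplus> (r \<odot> w' \<oplus> ng (r \<odot> w))" using c by (simp add: assoc)
  finally have "d \<oplus> ng d' = (d' \<oplus> (r \<odot> w' \<oplus> ng (r \<odot> w))) \<oplus> ng d'" by simp
  also have "\<dots> = (r \<odot> w' \<oplus> ng (r \<odot> w)) \<oplus> (d' \<oplus> ng d')" using c
    by (metis add_c assoc comm neg_c sm_c)
  also have "\<dots> = r \<odot> (w' \<oplus> ng w)" using c by (simp add: sm_add sm_neg)
  finally show ?thesis .
qed

lemma alg2: "d \<in> C \<Longrightarrow> d' \<in> C \<Longrightarrow> d' \<oplus> (d \<oplus> ng d') = d"
  by (metis sub_cancel comm neg_c)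

lemma alg3: "a \<in> C \<Longrightarrow> b \<in> C \<Longrightarrow> y \<in> C \<Longrightarrow> (a \<oplus> b) \<oplus> ((y \<oplus> ng a) \<oplus> ng b) = y"
proof -
  assume c: "a \<in> C" "b \<in> C" "y \<in> C"
  have "(a \<oplus> b) \<oplus> ((y \<oplus> ng a) \<oplus> ng b) = (a \<oplus> (y \<oplus> ng a)) \<oplus> (b \<oplus> ng b)"
    by (rule ac4) (use c in auto)
  also have "\<dots> = a \<oplus> (ng a \<oplus> y)" using c comm[of y "ng a"] by simp
  also have "\<dots> = y" using c sub_cancel by simp
  finally show ?thesis .
qed

lemma ds_pure:
  assumes ds: "direct_summand M E" and a: "a \<in> E" "a \<in> Q m"
  shows "\<exists>c\<in>E. a = qmul s m \<odot> c"
proof -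
  obtain D where E: "submodule M E" and D: "submodule M D" "E \<inter> D = {z0}"
    and CD: "C = {x \<oplus> y |x y. x \<in> E \<and> y \<in> D}" using ds by (auto simp: direct_summand_def)
  obtain c where c: "c \<in> C" "a = qmul s m \<odot> c" using a by (auto simp: qsub_def)
  obtain c1 c2 where cc: "c1 \<in> E" "c2 \<in> D" "c = c1 \<oplus> c2" using c CD by blast
  have cC: "c1 \<in> C" "c2 \<in> C" using cc subm_props(1)[OF E] subm_props(1)[OF D(1)] by auto
  have a2: "a = qmul s m \<odot> c1 \<oplus> qmul s m \<odot> c2" using c cc cC by (simp add: sm_add)
  have "qmul s m \<odot> c2 = ng (qmul s m \<odot> c1) \<oplus> a" using a2 cC sub_cancel2 by simp
  then have "qmul s m \<odot> c2 \<in> E" using subm_props(3,4,5)[OF E] cc a by simp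
  moreover have "qmul s m \<odot> c2 \<in> D" using subm_props(5)[OF D(1)] cc by simp
  ultimately have "qmul s m \<odot> c2 = z0" using D(2) by blast
  then show ?thesis using a2 cC cc by auto
qed

end


theorem lemma4p3:
  fixes s :: "nat \<Rightarrow> 'r::comm_ring_1"
    and H :: "('r, 'h) rmod"
    and H' :: "'h set"
    and E' :: "('k list \<Rightarrow> 'r) set"
    and Dom :: "((nat \<Rightarrow> ('k list \<Rightarrow> 'r) set) \<times> 'h) set"
    and \<phi> :: "(nat \<Rightarrow> ('k list \<Rightarrow> 'r) set) \<times> 'h \<Rightarrow> (nat \<Rightarrow> ('k list \<Rightarrow> 'r) set) \<times> 'h"
  assumes S_mc: "mult_closed_seq s"
    and R_red: "S_reduced_ring s"
    and R_tf: "S_torsion_free_ring s"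
    and R_ctf: "cotorsion_free s (ringmod :: ('r, 'r) rmod)"
    and lam_inf: "infinite (UNIV :: 'k set)"
    and lam_pow: "(UNIV :: (nat \<Rightarrow> 'k) set) \<approx> (UNIV :: 'k set)"
    and lam_R: "(UNIV :: 'r set) \<prec> (UNIV :: 'k set)"
    and H_mod: "is_rmod H"
    and H_ctf: "cotorsion_free s H"
    and H_card: "carrier H \<prec> (UNIV :: 'k set)"
    and H'_sub: "submodule H H'"
    and H'_pure: "pure s H H'"
    and E'_sum: "direct_summand (freemod :: ('r, 'k list \<Rightarrow> 'r) rmod) E'"
    and Dom_sub: "submodule (prodmod (completion s (freemod :: ('r, 'k list \<Rightarrow> 'r) rmod)) (submod H H')) Dom"
    and Dom_pure: "pure s (prodmod (completion s (freemod :: ('r, 'k list \<Rightarrow> 'r) rmod)) (submod H H')) Dom"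
    and E'_Dom: "(\<lambda>e. (cemb s (freemod :: ('r, 'k list \<Rightarrow> 'r) rmod) e, mzero H)) ` E' \<subseteq> Dom"
    and E'_pure: "pure s (submod (prodmod (completion s (freemod :: ('r, 'k list \<Rightarrow> 'r) rmod)) H) Dom) ((\<lambda>e. (cemb s (freemod :: ('r, 'k list \<Rightarrow> 'r) rmod) e, mzero H)) ` E')"
    and Dom_proj: "snd ` Dom = H'"
    and Dom_in: "Dom \<subseteq> (sub_completion s (freemod :: ('r, 'k list \<Rightarrow> 'r) rmod) E') \<times> H'"
    and \<phi>_hom: "rhom (submod (prodmod (completion s (freemod :: ('r, 'k list \<Rightarrow> 'r) rmod)) H) Dom) (prodmod (completion s (freemod :: ('r, 'k list \<Rightarrow> 'r) rmod)) H) \<phi>"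
  shows "\<exists>\<psi>. rhom (submod (prodmod (completion s (freemod :: ('r, 'k list \<Rightarrow> 'r) rmod)) H) ((sub_completion s (freemod :: ('r, 'k list \<Rightarrow> 'r) rmod) E') \<times> H')) (prodmod (completion s (freemod :: ('r, 'k list \<Rightarrow> 'r) rmod)) (completion s H)) \<psi> \<and>
           (\<forall>x\<in>Dom. \<psi> x = (fst (\<phi> x), cemb s H (snd (\<phi> x)))) \<and>
           (\<forall>\<psi>'. rhom (submod (prodmod (completion s (freemod :: ('r, 'k list \<Rightarrow> 'r) rmod)) H) ((sub_completion s (freemod :: ('r, 'k list \<Rightarrow> 'r) rmod) E') \<times> H')) (prodmod (completion s (freemod :: ('r, 'k list \<Rightarrow> 'r) rmod)) (completion s H)) \<psi>' \<and>
                  (\<forall>x\<in>Dom. \<psi>' x = (fst (\<phi> x), cemb s H (snd (\<phi> x)))) \<longrightarrow>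
                  (\<forall>x\<in>(sub_completion s (freemod :: ('r, 'k list \<Rightarrow> 'r) rmod) E') \<times> H'. \<psi>' x = \<psi> x))"
proof -
  let ?F = "freemod :: ('r, 'k list \<Rightarrow> 'r) rmod"
  let ?Fh = "completion s ?F"
  let ?Hh = "completion s H"
  let ?P = "prodmod ?Fh H"
  let ?Q = "prodmod ?Fh ?Hh"
  interpret F: rm ?F s by unfold_locales (rule freemod_is_rmod)
  interpret H: rm H s by unfold_locales (rule H_mod)
  interpret Fh: rm ?Fh s by unfold_locales (rule F.compl_is_rmod)
  interpret P: rm ?P s by unfold_locales (rule prodmod_is_rmod[OF F.compl_is_rmod H_mod])
  let ?E = "F.SC E'"
  let ?X = "?E \<times> H'"
  have E_sub: "submodule ?F E'" using E'_sum by (simp add: direct_summand_def)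
  have pE: "\<And>m a. a \<in> E' \<Longrightarrow> a \<in> F.Q m \<Longrightarrow> \<exists>c\<in>E'. a = msmult ?F (qmul s m) c"
    using F.ds_pure[OF E'_sum] by blast
  have SCeq: "sub_completion s ?F E' = ?E" by (rule F.SC_char[OF E_sub pE])
  have tfF: "\<And>n x. x \<in> carrier ?F \<Longrightarrow> msmult ?F (qmul s n) x = mzero ?F \<Longrightarrow> x = mzero ?F"
  proof -
    fix n and x :: "'k list \<Rightarrow> 'r"
    assume "msmult ?F (qmul s n) x = mzero ?F"
    then have "\<And>t. qmul s n * x t = 0" by (simp add: freemod_simps fun_eq_iff)
    then have "\<And>t. x t = 0" using qmul_tf[OF R_tf] by blast
    then show "x = mzero ?F" by (simp add: freemod_simps fun_eq_iff)
  qed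
  have H'C: "H' \<subseteq> carrier H" using H'_sub by (simp add: submodule_def)
  have H'z: "mzero H \<in> H'" and H'a: "\<And>a b. a \<in> H' \<Longrightarrow> b \<in> H' \<Longrightarrow> madd H a b \<in> H'"
    and H'n: "\<And>a. a \<in> H' \<Longrightarrow> mneg H a \<in> H'" and H's: "\<And>r a. a \<in> H' \<Longrightarrow> msmult H r a \<in> H'"
    using H'_sub by (auto simp: submodule_def)
  have EFh: "?E \<subseteq> carrier ?Fh" by (rule F.SC_sub)
  have XP: "?X \<subseteq> carrier ?P" using EFh H'C by auto
  have Xz: "mzero ?P \<in> ?X" using F.SC_closed(1)[OF E_sub] H'z by simp
  have Xa: "\<And>x y. x \<in> ?X \<Longrightarrow> y \<in> ?X \<Longrightarrow> madd ?P x y \<in> ?X"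
    using F.SC_closed(2)[OF E_sub] H'a by (auto simp: mem_Times_iff)
  have Xn: "\<And>x. x \<in> ?X \<Longrightarrow> mneg ?P x \<in> ?X"
    using F.SC_closed(3)[OF E_sub] H'n by (auto simp: mem_Times_iff)
  have Xs: "\<And>r x. x \<in> ?X \<Longrightarrow> msmult ?P r x \<in> ?X"
    using F.SC_closed(4)[OF E_sub] H's by (auto simp: mem_Times_iff)
  have DX: "Dom \<subseteq> ?X" using Dom_in SCeq by simp
  have DP: "Dom \<subseteq> carrier ?P" using DX XP by blast
  have Dsub: "submodule ?P Dom"
    using Dom_sub unfolding prodmod_submod
    by (rule submodule_submod) (use H'C in auto)
  have Dz: "mzero ?P \<in> Dom" and Da: "\<And>x y. x \<in> Dom \<Longrightarrow> y \<in> Dom \<Longrightarrow> madd ?P x y \<in> Dom"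
    and Dn: "\<And>x. x \<in> Dom \<Longrightarrow> mneg ?P x \<in> Dom" and Ds: "\<And>r x. x \<in> Dom \<Longrightarrow> msmult ?P r x \<in> Dom"
    using P.subm_props[OF Dsub] by auto
  have Dpure: "\<And>j. msmult ?P (s j) ` (carrier ?Fh \<times> H') \<inter> Dom = msmult ?P (s j) ` Dom"
    using Dom_pure unfolding prodmod_submod pure_def by simp
  have phC: "\<And>d. d \<in> Dom \<Longrightarrow> \<phi> d \<in> carrier ?P"
    and phA: "\<And>d e. d \<in> Dom \<Longrightarrow> e \<in> Dom \<Longrightarrow> \<phi> (madd ?P d e) = madd ?P (\<phi> d) (\<phi> e)"
    and phS: "\<And>r d. d \<in> Dom \<Longrightarrow> \<phi> (msmult ?P r d) = msmult ?P r (\<phi> d)"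
    using \<phi>_hom unfolding rhom_def by auto
  define R where "R n x d \<longleftrightarrow> d \<in> Dom \<and> (\<exists>w\<in>?X. x = madd ?P d (msmult ?P (qmul s n) w))" for n x d
  have Rwd: "fst (\<phi> d) n = fst (\<phi> d') n \<and> coset H (snd (\<phi> d)) (H.Q n) = coset H (snd (\<phi> d')) (H.Q n)"
    if hyp: "R n x d" "R n x d'" for n x d d'
  proof -
    obtain w w' where d: "d \<in> Dom" "d' \<in> Dom" and w: "w \<in> ?X" "w' \<in> ?X"
      and x: "x = madd ?P d (msmult ?P (qmul s n) w)" "x = madd ?P d' (msmult ?P (qmul s n) w')"
      using hyp unfolding R_def by blast
    have dC: "d \<in> carrier ?P" "d' \<in> carrier ?P" using d DP by auto
    have wC: "w \<in> carrier ?P" "w' \<in> carrier ?P" using w XP by auto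
    let ?u = "madd ?P w' (mneg ?P w)"
    let ?D = "madd ?P d (mneg ?P d')"
    have Deq: "?D = msmult ?P (qmul s n) ?u"
      by (rule P.alg1[OF dC wC]) (use x in simp)
    have uX: "?u \<in> ?X" using Xa Xn w by blast
    have DD: "?D \<in> Dom" using Da Dn d by blast
    obtain j where j: "qmul s n = s j" using qmul_range[OF S_mc] by (metis rangeE)
    have "?u \<in> carrier ?Fh \<times> H'" using uX EFh by auto
    then have "msmult ?P (s j) ?u \<in> msmult ?P (s j) ` (carrier ?Fh \<times> H')" by (rule imageI)
    then have "?D \<in> msmult ?P (s j) ` (carrier ?Fh \<times> H') \<inter> Dom"
      using Deq DD j by simp
    then have "?D \<in> msmult ?P (s j) ` Dom" using Dpure[of j] by blast
    then obtain e where e0: "e \<in> Dom" "?D = msmult ?P (s j) e" by (rule imageE) blast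
    then have e: "e \<in> Dom" "?D = msmult ?P (qmul s n) e" using j by simp_all
    have "d = madd ?P d' ?D" using P.alg2 dC by simp
    then have "\<phi> d = madd ?P (\<phi> d') (\<phi> (msmult ?P (qmul s n) e))" using phA d DD e by metis
    also have "\<dots> = madd ?P (\<phi> d') (msmult ?P (qmul s n) (\<phi> e))" using phS e by simp
    finally have pd: "\<phi> d = madd ?P (\<phi> d') (msmult ?P (qmul s n) (\<phi> e))" .
    have c1: "fst (\<phi> d') \<in> carrier ?Fh" "fst (\<phi> e) \<in> carrier ?Fh" "snd (\<phi> d') \<in> carrier H" "snd (\<phi> e) \<in> carrier H"
      using phC d e by (auto simp: mem_Times_iff)
    have "fst (\<phi> d) n = fst (\<phi> d') n" using pd F.LV[OF c1(1,2)] by simp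
    moreover have "coset H (snd (\<phi> d)) (H.Q n) = coset H (snd (\<phi> d')) (H.Q n)"
      using pd H.coset_absorb[OF c1(3) H.Q_in[OF c1(4)]] by simp
    ultimately show ?thesis by blast
  qed
  have Rex: "\<exists>d. R n x d" if x: "x \<in> ?X" for n x
  proof -
    have h: "snd x \<in> H'" and y: "fst x \<in> ?E" using x by auto
    obtain d0 where d0: "d0 \<in> Dom" "snd d0 = snd x" using h Dom_proj by force
    have fd0: "fst d0 \<in> ?E" using d0 DX by auto
    let ?y' = "madd ?Fh (fst x) (mneg ?Fh (fst d0))"
    have y': "?y' \<in> ?E" using F.SC_closed(2,3)[OF E_sub] y fd0 by blast
    obtain e where e: "e \<in> E'" "e \<in> ?y' n" using y' by (auto simp: F.SC_def)
    have eC: "e \<in> carrier ?F" using e E_sub by (auto simp: submodule_def)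
    let ?ce = "cemb s ?F e"
    have ce: "?ce \<in> ?E" using F.SC_closed(5)[OF E_sub e(1)] .
    let ?t = "madd ?Fh ?y' (mneg ?Fh ?ce)"
    have t: "?t \<in> ?E" using F.SC_closed(2,3)[OF E_sub] y' ce by blast
    have "e \<in> ?ce n" using F.coset_in[OF eC] by (simp add: F.cemb_lev)
    then have ne: "mneg ?F e \<in> mneg ?Fh ?ce n"
      using F.neg_lev[OF F.cemb_c[OF eC]] F.coset_in eC by simp
    have y'C: "?y' \<in> carrier ?Fh" using y' EFh by blast
    have nce: "mneg ?Fh ?ce \<in> carrier ?Fh" using F.neg_cc F.cemb_c eC by blast
    have "?t n = coset ?F (madd ?F e (mneg ?F e)) (F.Q n)"
      by (rule F.add_lev[OF y'C nce e(2) ne])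
    also have "\<dots> = F.Q n" using eC F.coset_zero[OF F.Q_sub] by simp
    finally have tn: "?t n = F.Q n" .
    have "\<exists>z\<in>?E. ?t = msmult ?Fh (qmul s n) z"
    proof (rule F.DIV[OF S_mc _ E_sub _ t tn])
      show "\<And>n x. x \<in> carrier ?F \<Longrightarrow> msmult ?F (qmul s n) x = mzero ?F \<Longrightarrow> x = mzero ?F" by (rule tfF)
      show "\<And>m a. a \<in> E' \<Longrightarrow> a \<in> F.Q m \<Longrightarrow> \<exists>c\<in>E'. a = msmult ?F (qmul s m) c" by (rule pE)
    qed
    then obtain z where z: "z \<in> ?E" "?t = msmult ?Fh (qmul s n) z" by blast
    define d where "d = madd ?P d0 (?ce, mzero H)"
    have "(?ce, mzero H) \<in> Dom" using E'_Dom e(1) by auto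
    then have dD: "d \<in> Dom" using Da d0 d_def by blast
    have wX: "(z, mzero H) \<in> ?X" using z H'z by simp
    have c: "fst d0 \<in> carrier ?Fh" "?ce \<in> carrier ?Fh" "fst x \<in> carrier ?Fh" "snd d0 \<in> carrier H"
      using fd0 ce y EFh d0 h H'C by auto
    have "madd ?Fh (madd ?Fh (fst d0) ?ce) (msmult ?Fh (qmul s n) z) = fst x"
      using z(2)[symmetric] Fh.alg3[OF c(1,2,3)] by simp
    moreover have "madd H (madd H (snd d0) (mzero H)) (msmult H (qmul s n) (mzero H)) = snd x"
      using c(4) d0 by simp
    ultimately have "x = madd ?P d (msmult ?P (qmul s n) (z, mzero H))"
      unfolding d_def by (simp add: prod_eq_iff)
    then have "R n x d" unfolding R_def
      by (intro conjI bexI[of _ "(z, mzero H)"] dD wX)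
    then show ?thesis by blast
  qed
  define D where "D x n = (SOME d. R n x d)" for x n
  have RD: "R n x (D x n)" if "x \<in> ?X" for x n
    unfolding D_def by (rule someI_ex) (rule Rex[OF that])
  define \<psi> where "\<psi> x = ((\<lambda>n. fst (\<phi> (D x n)) n), (\<lambda>n. coset H (snd (\<phi> (D x n))) (H.Q n)))" for x
  have K: "fst (\<psi> x) n = fst (\<phi> d) n \<and> snd (\<psi> x) n = coset H (snd (\<phi> d)) (H.Q n)"
    if "x \<in> ?X" "R n x d" for x n d
    using Rwd[OF RD[OF that(1)] that(2)] by (simp add: \<psi>_def)
  have RdD: "R n x d \<Longrightarrow> d \<in> Dom" for n x d by (simp add: R_def)
  have Rsuc: "R n x d" if hyp: "R (Suc n) x d" for n x d
  proof -
    obtain w where d: "d \<in> Dom" and w: "w \<in> ?X" and x: "x = madd ?P d (msmult ?P (qmul s (Suc n)) w)"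
      using hyp unfolding R_def by blast
    have "msmult ?P (qmul s (Suc n)) w = msmult ?P (qmul s n) (msmult ?P (s n) w)"
      using P.sm_sm w XP by (auto simp: qmul_Suc)
    then have "x = madd ?P d (msmult ?P (qmul s n) (msmult ?P (s n) w))" using x by simp
    then show ?thesis unfolding R_def
      by (intro conjI bexI[of _ "msmult ?P (s n) w"] d Xs[OF w])
  qed
  have Radd: "R n (madd ?P x y) (madd ?P d e)" if hyp: "R n x d" "R n y e" for n x y d e
  proof -
    obtain w w' where d: "d \<in> Dom" "e \<in> Dom" and w: "w \<in> ?X" "w' \<in> ?X"
      and x: "x = madd ?P d (msmult ?P (qmul s n) w)" "y = madd ?P e (msmult ?P (qmul s n) w')"
      using hyp unfolding R_def by blast
    have c: "d \<in> carrier ?P" "e \<in> carrier ?P" "w \<in> carrier ?P" "w' \<in> carrier ?P" using d w DP XP by auto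
    have "madd ?P x y = madd ?P (madd ?P d e) (madd ?P (msmult ?P (qmul s n) w) (msmult ?P (qmul s n) w'))"
      unfolding x by (rule P.ac4) (use c in auto)
    also have "\<dots> = madd ?P (madd ?P d e) (msmult ?P (qmul s n) (madd ?P w w'))"
      using c P.sm_add by simp
    finally have eq: "madd ?P x y = madd ?P (madd ?P d e) (msmult ?P (qmul s n) (madd ?P w w'))" .
    show ?thesis unfolding R_def
      by (intro conjI bexI[of _ "madd ?P w w'"] Da[OF d] Xa[OF w] eq)
  qed
  have Rsm: "R n (msmult ?P r x) (msmult ?P r d)" if hyp: "R n x d" for n x d r
  proof -
    obtain w where d: "d \<in> Dom" and w: "w \<in> ?X" and x: "x = madd ?P d (msmult ?P (qmul s n) w)"
      using hyp unfolding R_def by blast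
    have c: "d \<in> carrier ?P" "w \<in> carrier ?P" using d w DP XP by auto
    have "msmult ?P r (msmult ?P (qmul s n) w) = msmult ?P (qmul s n) (msmult ?P r w)"
      using c P.sm_sm by (metis mult.commute)
    moreover have "msmult ?P r x = madd ?P (msmult ?P r d) (msmult ?P r (msmult ?P (qmul s n) w))"
      unfolding x by (rule P.sm_add[OF c(1) P.sm_c[OF c(2)]])
    ultimately have "msmult ?P r x = madd ?P (msmult ?P r d) (msmult ?P (qmul s n) (msmult ?P r w))"
      by simp
    then show ?thesis unfolding R_def
      by (intro conjI bexI[of _ "msmult ?P r w"] Ds[OF d] Xs[OF w])
  qed
  have RDom: "R n d d" if "d \<in> Dom" for n d
  proof -
    have "d = madd ?P d (msmult ?P (qmul s n) (mzero ?P))" using that DP by auto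
    then show ?thesis unfolding R_def
      by (intro conjI bexI[of _ "mzero ?P"] that Xz)
  qed
  have psiC: "\<psi> x \<in> carrier ?Q" if x: "x \<in> ?X" for x
  proof -
    have fC: "fst (\<phi> (D x n)) \<in> carrier ?Fh" "snd (\<phi> (D x n)) \<in> carrier H" for n
      using phC[OF RdD[OF RD[OF x]]] by (auto simp: mem_Times_iff)
    have eqn: "fst (\<phi> (D x (Suc n))) n = fst (\<phi> (D x n)) n \<and>
       coset H (snd (\<phi> (D x (Suc n)))) (H.Q n) = coset H (snd (\<phi> (D x n))) (H.Q n)" for n
      using Rwd[OF Rsuc[OF RD[OF x, of "Suc n"]] RD[OF x, of n]] .
    have "fst (\<psi> x) \<in> carrier ?Fh"
      unfolding F.compl_carrier
    proof (intro conjI allI)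
      fix n
      show "\<exists>a\<in>carrier ?F. fst (\<psi> x) n = coset ?F a (F.Q n)"
        using fC(1)[of n] unfolding F.compl_carrier by (simp add: \<psi>_def)
      have "fst (\<phi> (D x (Suc n))) (Suc n) \<subseteq> fst (\<phi> (D x (Suc n))) n"
        using fC(1)[of "Suc n"] unfolding F.compl_carrier by blast
      then show "fst (\<psi> x) (Suc n) \<subseteq> fst (\<psi> x) n" using eqn[of n] by (simp add: \<psi>_def)
    qed
    moreover have "snd (\<psi> x) \<in> carrier ?Hh"
      unfolding H.compl_carrier
    proof (intro conjI allI)
      fix n
      show "\<exists>a\<in>carrier H. snd (\<psi> x) n = coset H a (H.Q n)"
        using fC(2)[of n] by (auto simp: \<psi>_def)
      have "coset H (snd (\<phi> (D x (Suc n)))) (H.Q (Suc n)) \<subseteq> coset H (snd (\<phi> (D x (Suc n)))) (H.Q n)"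
        by (rule H.coset_mono[OF H.Q_mono]) simp
      then show "snd (\<psi> x) (Suc n) \<subseteq> snd (\<psi> x) n" using eqn[of n] by (simp add: \<psi>_def)
    qed
    ultimately show ?thesis by (simp add: mem_Times_iff)
  qed
  have hom: "rhom (submod ?P ?X) ?Q \<psi>"
    unfolding rhom_def
  proof (intro conjI ballI allI)
    fix x assume "x \<in> carrier (submod ?P ?X)" then show "\<psi> x \<in> carrier ?Q" using psiC by simp
  next
    fix x y assume "x \<in> carrier (submod ?P ?X)" "y \<in> carrier (submod ?P ?X)"
    then have x: "x \<in> ?X" and y: "y \<in> ?X" by auto
    have xy: "madd ?P x y \<in> ?X" using Xa x y by blast
    have fst_eq: "fst (\<psi> (madd ?P x y)) n = madd ?Fh (fst (\<psi> x)) (fst (\<psi> y)) n" for n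
    proof -
      let ?d = "D x n" and ?e = "D y n"
      have R2: "R n (madd ?P x y) (madd ?P ?d ?e)" using Radd RD x y by blast
      have dd: "?d \<in> Dom" "?e \<in> Dom" using RdD RD x y by blast+
      have "fst (\<psi> (madd ?P x y)) n = fst (\<phi> (madd ?P ?d ?e)) n" using K[OF xy R2] by simp
      also have "\<dots> = madd ?Fh (fst (\<phi> ?d)) (fst (\<phi> ?e)) n" using phA[OF dd] by simp
      also have "\<dots> = madd ?Fh (fst (\<psi> x)) (fst (\<psi> y)) n"
        using K[OF x RD[OF x]] K[OF y RD[OF y]] by (simp add: F.compl_ops)
      finally show ?thesis .
    qed
    have snd_eq: "snd (\<psi> (madd ?P x y)) n = madd ?Hh (snd (\<psi> x)) (snd (\<psi> y)) n" for n
    proof -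
      let ?d = "D x n" and ?e = "D y n"
      have R2: "R n (madd ?P x y) (madd ?P ?d ?e)" using Radd RD x y by blast
      have dd: "?d \<in> Dom" "?e \<in> Dom" using RdD RD x y by blast+
      have c: "snd (\<phi> ?d) \<in> carrier H" "snd (\<phi> ?e) \<in> carrier H" using phC dd by (auto simp: mem_Times_iff)
      have "snd (\<psi> (madd ?P x y)) n = coset H (snd (\<phi> (madd ?P ?d ?e))) (H.Q n)" using K[OF xy R2] by simp
      also have "\<dots> = coset H (madd H (snd (\<phi> ?d)) (snd (\<phi> ?e))) (H.Q n)" using phA[OF dd] by simp
      also have "\<dots> = madd ?Hh (snd (\<psi> x)) (snd (\<psi> y)) n"
        using K[OF x RD[OF x]] K[OF y RD[OF y]] H.coset_sum[OF H.Q_sub c] by (simp add: H.compl_ops)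
      finally show ?thesis .
    qed
    show "\<psi> (madd (submod ?P ?X) x y) = madd ?Q (\<psi> x) (\<psi> y)"
      using fst_eq snd_eq by (simp add: prod_eq_iff fun_eq_iff)
  next
    fix r x assume "x \<in> carrier (submod ?P ?X)"
    then have x: "x \<in> ?X" by auto
    have rx: "msmult ?P r x \<in> ?X" using Xs x by blast
    have fst_eq: "fst (\<psi> (msmult ?P r x)) n = msmult ?Fh r (fst (\<psi> x)) n" for n
    proof -
      let ?d = "D x n"
      have R2: "R n (msmult ?P r x) (msmult ?P r ?d)" using Rsm RD x by blast
      have dd: "?d \<in> Dom" using RdD RD x by blast
      have "fst (\<psi> (msmult ?P r x)) n = fst (\<phi> (msmult ?P r ?d)) n" using K[OF rx R2] by simp
      also have "\<dots> = msmult ?Fh r (fst (\<phi> ?d)) n" using phS[OF dd] by simp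
      also have "\<dots> = msmult ?Fh r (fst (\<psi> x)) n"
        using K[OF x RD[OF x]] by (simp add: F.compl_ops)
      finally show ?thesis .
    qed
    have snd_eq: "snd (\<psi> (msmult ?P r x)) n = msmult ?Hh r (snd (\<psi> x)) n" for n
    proof -
      let ?d = "D x n"
      have R2: "R n (msmult ?P r x) (msmult ?P r ?d)" using Rsm RD x by blast
      have dd: "?d \<in> Dom" using RdD RD x by blast
      have c: "snd (\<phi> ?d) \<in> carrier H" using phC dd by (auto simp: mem_Times_iff)
      have "snd (\<psi> (msmult ?P r x)) n = coset H (snd (\<phi> (msmult ?P r ?d))) (H.Q n)" using K[OF rx R2] by simp
      also have "\<dots> = coset H (msmult H r (snd (\<phi> ?d))) (H.Q n)" using phS[OF dd] by simp
      also have "\<dots> = msmult ?Hh r (snd (\<psi> x)) n"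
        using K[OF x RD[OF x]] H.coset_smult[OF H.Q_sub c] by (simp add: H.compl_ops)
      finally show ?thesis .
    qed
    show "\<psi> (msmult (submod ?P ?X) r x) = msmult ?Q r (\<psi> x)"
      using fst_eq snd_eq by (simp add: prod_eq_iff fun_eq_iff)
  qed
  have agree: "\<forall>x\<in>Dom. \<psi> x = (fst (\<phi> x), cemb s H (snd (\<phi> x)))"
  proof
    fix x assume x: "x \<in> Dom"
    then have xX: "x \<in> ?X" using DX by blast
    have "fst (\<psi> x) n = fst (\<phi> x) n \<and> snd (\<psi> x) n = cemb s H (snd (\<phi> x)) n" for n
      using K[OF xX RDom[OF x]] by (simp add: H.cemb_lev)
    then show "\<psi> x = (fst (\<phi> x), cemb s H (snd (\<phi> x)))" by (simp add: prod_eq_iff fun_eq_iff)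
  qed
  have uniq: "\<psi>' x = \<psi> x"
    if h': "rhom (submod ?P ?X) ?Q \<psi>'" and ag': "\<forall>x\<in>Dom. \<psi>' x = (fst (\<phi> x), cemb s H (snd (\<phi> x)))"
      and x: "x \<in> ?X" for \<psi>' x
  proof -
    have h'C: "\<And>x. x \<in> ?X \<Longrightarrow> \<psi>' x \<in> carrier ?Q"
      and h'A: "\<And>x y. x \<in> ?X \<Longrightarrow> y \<in> ?X \<Longrightarrow> \<psi>' (madd ?P x y) = madd ?Q (\<psi>' x) (\<psi>' y)"
      and h'S: "\<And>r x. x \<in> ?X \<Longrightarrow> \<psi>' (msmult ?P r x) = msmult ?Q r (\<psi>' x)"
      using h' unfolding rhom_def by auto
    have lv: "fst (\<psi>' x) n = fst (\<psi> x) n \<and> snd (\<psi>' x) n = snd (\<psi> x) n" for n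
    proof -
      obtain d w where d: "d \<in> Dom" and w: "w \<in> ?X" and xe: "x = madd ?P d (msmult ?P (qmul s n) w)"
        using RD[OF x, of n] unfolding R_def by blast
      have dX: "d \<in> ?X" using d DX by blast
      have qw: "msmult ?P (qmul s n) w \<in> ?X" using Xs w by blast
      have "\<psi>' x = madd ?Q (\<psi>' d) (msmult ?Q (qmul s n) (\<psi>' w))"
        using h'A[OF dX qw] h'S[OF w] xe by simp
      then have e: "\<psi>' x = madd ?Q (fst (\<phi> d), cemb s H (snd (\<phi> d))) (msmult ?Q (qmul s n) (\<psi>' w))"
        using ag' d by simp
      have c: "fst (\<phi> d) \<in> carrier ?Fh" "snd (\<phi> d) \<in> carrier H"
        "fst (\<psi>' w) \<in> carrier ?Fh" "snd (\<psi>' w) \<in> carrier ?Hh"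
        using phC[OF d] h'C[OF w] by (auto simp: mem_Times_iff)
      have "fst (\<psi>' x) n = fst (\<phi> d) n" using e F.LV[OF c(1,3)] by simp
      moreover have "snd (\<psi>' x) n = cemb s H (snd (\<phi> d)) n"
        using e H.LV[OF H.cemb_c[OF c(2)] c(4)] by simp
      moreover have "fst (\<psi> x) n = fst (\<phi> d) n \<and> snd (\<psi> x) n = coset H (snd (\<phi> d)) (H.Q n)"
        using K[OF x] RD[OF x] d w xe unfolding R_def by blast
      ultimately show ?thesis by (simp add: H.cemb_lev)
    qed
    then show ?thesis by (simp add: prod_eq_iff fun_eq_iff)
  qed
  show ?thesis
    unfolding SCeq
    using hom agree uniq by blast
qed


end
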